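(* Let $(V,E,d)$ be a multi-weighted game graph and $v\in V$. If the value of the mean-payoff game $\mathrm{MP}(V,E^{(1)})$ at $v$ is non-negative, then every positional optimal strategy of Player 1 (Max) in $\mathrm{MP}(V,E^{(1)})$ is winning for Player 1 from $v$ in the lexicographic energy game $\mathrm{LexEn}(V,E,d)$. If the value at $v$ is negative, then every positional optimal strategy of Player 2 (Min) in $\mathrm{MP}(V,E^{(1)})$ is winning for Player 2 from $v$ in $\mathrm{LexEn}(V,E,d)$.
   Context: A multi-weighted game graph is a tuple $(V,E,d)$ where $d\ge1$, $V=V_1\uplus V_2$ is a finite vertex set (Player 1 and Player 2 vertices), and $E\subseteq V\times\mathbb Z^d\times V$ is a finite set of edges $v\xrightarrow{\vec w}v'$, every vertex having an outgoing edge; players strictly alternate, edge weights are determined by endpoints, and not all weights are zero. Plays are infinite paths $v_0\xrightarrow{\vec w_1}v_1\cdots$; strategies map finite paths ending in a player's vertex to an outgoing edge; positional strategies depend only on the last vertex; a strategy is winning from $v$ if all plays from $v$ consistent with it are won. In $\mathrm{LexEn}(V,E,d)$, a play is won by Player 2 if there exists $1\le k\le d$ with $\limsup_n\sum_{j\le n}\vec w_j(k)=-\infty$ and $\liminf_n\sum_{j\le n}\vec w_j(\ell)<+\infty$ for all $\ell<k$; otherwise by Player 1. The weighted edge set $E^{(1)}$: define $E^{(d)}$ giving edge $v\xrightarrow{\vec w}v'$ weight $r_d=\vec w(d)$, and for $i=d-1,\dots,1$, $E^{(i)}$ giving it weight $r_i=\vec w(i)(|V|\cdot\|E^{(i+1)}\|+1)+r_{i+1}$,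 with $\|E^{(i+1)}\|$ the maximal absolute weight in $E^{(i+1)}$. The mean-payoff game $\mathrm{MP}(V,E^{(1)})$ is played on the same vertices with these integer weights; on a play with weights $u_1,u_2,\dots$, Max (Player 1) gains $\liminf_n(u_1+\dots+u_n)/n$ and Min (Player 2) loses $\limsup_n(u_1+\dots+u_n)/n$. Optimal strategies are those guaranteeing at least as good a payoff as any other strategy; positional optimal strategies exist for both players and yield a common value at each initial vertex. *)

theory Defs
  imports Complex_Main "HOL-Library.Extended_Real" "HOL-Library.Liminf_Limsup"
begin

text \<open>Edges v --w--> v' are triples (v, w, v'); a weight vector in Z^d is a function
  w :: nat => int whose meaningful components are w 1, ..., w d (all other components are 0).\<close>

type_synonym 'v edge = "'v \<times> (nat \<Rightarrow> int) \<times> 'v"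

definition game_graph :: "'v set \<Rightarrow> 'v set \<Rightarrow> 'v edge set \<Rightarrow> nat \<Rightarrow> bool" where
  "game_graph V1 V2 E d \<longleftrightarrow>
     d \<ge> 1 \<and> finite V1 \<and> finite V2 \<and> V1 \<inter> V2 = {} \<and> finite E \<and>
     (\<forall>(a, w, b) \<in> E. a \<in> V1 \<union> V2 \<and> b \<in> V1 \<union> V2 \<and> (\<forall>k. k \<notin> {1..d} \<longrightarrow> w k = 0)) \<and>
     (\<forall>a \<in> V1 \<union> V2. \<exists>w b. (a, w, b) \<in> E) \<and>
     (\<forall>(a, w, b) \<in> E. (a \<in> V1 \<longleftrightarrow> b \<in> V2)) \<and>
     (\<forall>a w w' b. (a, w, b) \<in> E \<longrightarrow> (a, w', b) \<in> E \<longrightarrow> w = w') \<and>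
     (\<exists>(a, w, b) \<in> E. \<exists>k \<in> {1..d}. w k \<noteq> 0)"

text \<open>scal k n E d w is the weight of an edge with weight vector w in E^(d-k),
  where n = |V|.  So scal 0 = r_d, and scal (Suc k) corresponds to index i = d - Suc k.\<close>

primrec scal :: "nat \<Rightarrow> nat \<Rightarrow> 'v edge set \<Rightarrow> nat \<Rightarrow> (nat \<Rightarrow> int) \<Rightarrow> int" where
  "scal 0 n E d w = w d"
| "scal (Suc k) n E d w =
     w (d - Suc k) * (int n * Max {\<bar>scal k n E d w'\<bar> | w'. \<exists>a b. (a, w', b) \<in> E} + 1)
     + scal k n E d w"

definition mpw :: "'v set \<Rightarrow> 'v edge set \<Rightarrow> nat \<Rightarrow> (nat \<Rightarrow> int) \<Rightarrow> int" where
  "mpw V E d w = scal (d - 1) (card V) E d w"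

definition play :: "'v edge set \<Rightarrow> 'v \<Rightarrow> (nat \<Rightarrow> 'v edge) \<Rightarrow> bool" where
  "play E u e \<longleftrightarrow> (\<forall>n. e n \<in> E) \<and> fst (e 0) = u \<and> (\<forall>n. snd (snd (e n)) = fst (e (Suc n)))"

text \<open>A finite path is a start vertex together with a list of edges; its last vertex:\<close>
definition lastv :: "'v \<Rightarrow> 'v edge list \<Rightarrow> 'v" where
  "lastv u es = (if es = [] then u else snd (snd (last es)))"

definition strategy :: "'v set \<Rightarrow> 'v edge set \<Rightarrow> ('v \<Rightarrow> 'v edge list \<Rightarrow> 'v edge) \<Rightarrow> bool" where
  "strategy P E \<sigma> \<longleftrightarrow>
     (\<forall>u es. lastv u es \<in> P \<longrightarrow> \<sigma> u es \<in> E \<and> fst (\<sigma> u es) = lastv u es)"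

definition positional :: "'v set \<Rightarrow> 'v edge set \<Rightarrow> ('v \<Rightarrow> 'v edge) \<Rightarrow> bool" where
  "positional P E \<sigma> \<longleftrightarrow> (\<forall>u \<in> P. \<sigma> u \<in> E \<and> fst (\<sigma> u) = u)"

definition lift :: "('v \<Rightarrow> 'v edge) \<Rightarrow> 'v \<Rightarrow> 'v edge list \<Rightarrow> 'v edge" where
  "lift \<sigma> u es = \<sigma> (lastv u es)"

definition consistent :: "'v set \<Rightarrow> ('v \<Rightarrow> 'v edge list \<Rightarrow> 'v edge) \<Rightarrow> 'v \<Rightarrow> (nat \<Rightarrow> 'v edge) \<Rightarrow> bool" where
  "consistent P \<sigma> u e \<longleftrightarrow> (\<forall>n. fst (e n) \<in> P \<longrightarrow> e n = \<sigma> u (map e [0..<n]))"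

definition avg :: "((nat \<Rightarrow> int) \<Rightarrow> int) \<Rightarrow> (nat \<Rightarrow> 'v edge) \<Rightarrow> nat \<Rightarrow> real" where
  "avg r e n = real_of_int (\<Sum>j\<le>n. r (fst (snd (e j)))) / real (Suc n)"

definition guar_max :: "'v set \<Rightarrow> 'v edge set \<Rightarrow> ((nat \<Rightarrow> int) \<Rightarrow> int)
    \<Rightarrow> ('v \<Rightarrow> 'v edge list \<Rightarrow> 'v edge) \<Rightarrow> 'v \<Rightarrow> ereal" where
  "guar_max V1 E r \<sigma> u =
     Inf {liminf (\<lambda>n. ereal (avg r e n)) | e. play E u e \<and> consistent V1 \<sigma> u e}"

definition guar_min :: "'v set \<Rightarrow> 'v edge set \<Rightarrow> ((nat \<Rightarrow> int) \<Rightarrow> int)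
    \<Rightarrow> ('v \<Rightarrow> 'v edge list \<Rightarrow> 'v edge) \<Rightarrow> 'v \<Rightarrow> ereal" where
  "guar_min V2 E r \<tau> u =
     Sup {limsup (\<lambda>n. ereal (avg r e n)) | e. play E u e \<and> consistent V2 \<tau> u e}"

text \<open>Value of the mean-payoff game (as the best guarantee of Max; equals Min's by determinacy).\<close>
definition mp_value :: "'v set \<Rightarrow> 'v edge set \<Rightarrow> ((nat \<Rightarrow> int) \<Rightarrow> int) \<Rightarrow> 'v \<Rightarrow> ereal" where
  "mp_value V1 E r u = Sup {guar_max V1 E r \<sigma> u | \<sigma>. strategy V1 E \<sigma>}"

definition optimal_max :: "'v set \<Rightarrow> 'v set \<Rightarrow> 'v edge set \<Rightarrow> ((nat \<Rightarrow> int) \<Rightarrow> int)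
    \<Rightarrow> ('v \<Rightarrow> 'v edge list \<Rightarrow> 'v edge) \<Rightarrow> bool" where
  "optimal_max V1 V2 E r \<sigma> \<longleftrightarrow> strategy V1 E \<sigma> \<and>
     (\<forall>u \<in> V1 \<union> V2. \<forall>\<sigma>'. strategy V1 E \<sigma>' \<longrightarrow> guar_max V1 E r \<sigma>' u \<le> guar_max V1 E r \<sigma> u)"

definition optimal_min :: "'v set \<Rightarrow> 'v set \<Rightarrow> 'v edge set \<Rightarrow> ((nat \<Rightarrow> int) \<Rightarrow> int)
    \<Rightarrow> ('v \<Rightarrow> 'v edge list \<Rightarrow> 'v edge) \<Rightarrow> bool" where
  "optimal_min V1 V2 E r \<tau> \<longleftrightarrow> strategy V2 E \<tau> \<and>
     (\<forall>u \<in> V1 \<union> V2. \<forall>\<tau>'. strategy V2 E \<tau>' \<longrightarrow> guar_min V2 E r \<tau> u \<le> guar_min V2 E r \<tau>' u)"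

definition psum :: "(nat \<Rightarrow> 'v edge) \<Rightarrow> nat \<Rightarrow> nat \<Rightarrow> ereal" where
  "psum e k n = ereal (real_of_int (\<Sum>j\<le>n. fst (snd (e j)) k))"

definition lex_win2 :: "nat \<Rightarrow> (nat \<Rightarrow> 'v edge) \<Rightarrow> bool" where
  "lex_win2 d e \<longleftrightarrow> (\<exists>k \<in> {1..d}. limsup (psum e k) = -\<infinity> \<and>
      (\<forall>l \<in> {1..<k}. liminf (psum e l) < \<infinity>))"

definition lex_win1 :: "nat \<Rightarrow> (nat \<Rightarrow> 'v edge) \<Rightarrow> bool" where
  "lex_win1 d e \<longleftrightarrow> \<not> lex_win2 d e"

definition winning1 :: "'v set \<Rightarrow> 'v edge set \<Rightarrow> nat \<Rightarrow> ('v \<Rightarrow> 'v edge list \<Rightarrow> 'v edge) \<Rightarrow> 'v \<Rightarrow> bool" where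
  "winning1 V1 E d \<sigma> u \<longleftrightarrow> (\<forall>e. play E u e \<and> consistent V1 \<sigma> u e \<longrightarrow> lex_win1 d e)"

definition winning2 :: "'v set \<Rightarrow> 'v edge set \<Rightarrow> nat \<Rightarrow> ('v \<Rightarrow> 'v edge list \<Rightarrow> 'v edge) \<Rightarrow> 'v \<Rightarrow> bool" where
  "winning2 V2 E d \<tau> u \<longleftrightarrow> (\<forall>e. play E u e \<and> consistent V2 \<tau> u e \<longrightarrow> lex_win2 d e)"

end

theory Submission
  imports Defs
begin

definition tgt :: "'v edge \<Rightarrow> 'v" where "tgt x = snd (snd x)"

fun walk :: "'v \<Rightarrow> 'v edge list \<Rightarrow> bool" where
  "walk x [] = True"
| "walk x (a # s) = (fst a = x \<and> walk (tgt a) s)"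

definition vs :: "'v \<Rightarrow> 'v edge list \<Rightarrow> 'v list" where "vs u s = u # map tgt s"

lemma lastv_Nil[simp]: "lastv u [] = u" by (simp add: lastv_def)
lemma lastv_Cons[simp]: "lastv u (a # s) = lastv (tgt a) s"
  by (simp add: lastv_def tgt_def)
lemma lastv_append: "lastv u (a @ b) = lastv (lastv u a) b"
  by (induction a arbitrary: u) auto
lemma lastv_snoc[simp]: "lastv u (s @ [x]) = tgt x"
  by (simp add: lastv_append)
lemma lastv_vs: "lastv u s = last (vs u s)"
  by (induction s arbitrary: u) (auto simp: vs_def)

lemma walk_append: "walk x (a @ b) \<longleftrightarrow> walk x a \<and> walk (lastv x a) b"
  by (induction a arbitrary: x) auto

lemma walk_nth: "walk x s \<Longrightarrow> j < length s \<Longrightarrow> fst (s ! j) = vs x s ! j"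
proof (induction s arbitrary: x j)
  case Nil then show ?case by simp
next
  case (Cons a s) then show ?case by (cases j) (auto simp: vs_def)
qed

lemma length_vs[simp]: "length (vs u s) = Suc (length s)" by (simp add: vs_def)

lemma vs_take: "vs u (take i s) = take (Suc i) (vs u s)"
  by (simp add: vs_def take_map)

lemma lastv_take: "i \<le> length s \<Longrightarrow> lastv u (take i s) = vs u s ! i"
proof -
  assume "i \<le> length s"
  then have "Suc i \<le> length (vs u s)" by simp
  then have "take (Suc i) (vs u s) = take i (vs u s) @ [vs u s ! i]"
    by (simp add: take_Suc_conv_app_nth)
  then show ?thesis unfolding lastv_vs vs_take by simp
qed

lemma tw_less: "\<exists>x\<in>set xs. \<not> P x \<Longrightarrow> length (takeWhile P xs) < length xs"
  by (induction xs) auto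

definition closes :: "'v \<Rightarrow> 'v edge list \<Rightarrow> 'v edge \<Rightarrow> bool" where
  "closes u s x = (tgt x \<in> set (vs u s))"
definition cut :: "'v \<Rightarrow> 'v edge list \<Rightarrow> 'v edge \<Rightarrow> nat" where
  "cut u s x = length (takeWhile (\<lambda>y. y \<noteq> tgt x) (vs u s))"
definition step :: "'v \<Rightarrow> 'v edge list \<Rightarrow> 'v edge \<Rightarrow> 'v edge list" where
  "step u s x = (if closes u s x then take (cut u s x) s else s @ [x])"
definition cyc :: "'v \<Rightarrow> 'v edge list \<Rightarrow> 'v edge \<Rightarrow> 'v edge list" where
  "cyc u s x = drop (cut u s x) s @ [x]"
definition stk :: "'v \<Rightarrow> 'v edge list \<Rightarrow> 'v edge list" where
  "stk u es = foldl (step u) [] es"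

lemma stk_snoc: "stk u (es @ [x]) = step u (stk u es) x"
  by (simp add: stk_def)

lemma cut_less: "closes u s x \<Longrightarrow> cut u s x \<le> length s"
proof -
  assume "closes u s x"
  then have "length (takeWhile (\<lambda>y. y \<noteq> tgt x) (vs u s)) < length (vs u s)"
    unfolding closes_def by (intro tw_less) auto
  then show ?thesis by (simp add: cut_def)
qed

lemma cut_nth: "closes u s x \<Longrightarrow> vs u s ! cut u s x = tgt x"
proof -
  assume "closes u s x"
  then have "length (takeWhile (\<lambda>y. y \<noteq> tgt x) (vs u s)) < length (vs u s)"
    unfolding closes_def by (intro tw_less) auto
  from nth_length_takeWhile[OF this] show ?thesis by (simp add: cut_def)
qed

definition valid :: "'v edge set \<Rightarrow> 'v set \<Rightarrow> 'v \<Rightarrow> 'v edge list \<Rightarrow> bool" where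
  "valid A V u s \<longleftrightarrow> walk u s \<and> distinct (vs u s) \<and> set (vs u s) \<subseteq> V \<and> set s \<subseteq> A"

lemma valid_Nil: "u \<in> V \<Longrightarrow> valid A V u []"
  by (simp add: valid_def vs_def)

lemma step_valid:
  assumes "valid A V u s" "x \<in> A" "fst x = lastv u s" "tgt x \<in> V"
  shows "valid A V u (step u s x) \<and> lastv u (step u s x) = tgt x"
proof (cases "closes u s x")
  case True
  have c: "cut u s x \<le> length s" using cut_less[OF True] .
  have "lastv u (take (cut u s x) s) = tgt x"
    using lastv_take[OF c] cut_nth[OF True] by simp
  moreover have "walk u (take (cut u s x) s)"
    using assms(1) unfolding valid_def
    by (metis append_take_drop_id walk_append)
  moreover have "distinct (vs u (take (cut u s x) s))"
    using assms(1) unfolding valid_def vs_take by simp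
  moreover have "set (vs u (take (cut u s x) s)) \<subseteq> V"
    using assms(1) unfolding valid_def vs_take by (meson order_trans set_take_subset)
  moreover have "set (take (cut u s x) s) \<subseteq> A"
    using assms(1) unfolding valid_def by (meson order_trans set_take_subset)
  ultimately show ?thesis using True by (simp add: step_def valid_def)
next
  case False
  then show ?thesis using assms
    by (auto simp: step_def valid_def walk_append closes_def vs_def)
qed

lemma cyc_props:
  assumes "valid A V u s" "x \<in> A" "fst x = lastv u s" "closes u s x" "finite V"
  shows "walk (tgt x) (cyc u s x) \<and> lastv (tgt x) (cyc u s x) = tgt x
         \<and> set (cyc u s x) \<subseteq> A \<and> length (cyc u s x) \<le> card V \<and> cyc u s x \<noteq> []"
proof -
  let ?i = "cut u s x"
  have c: "?i \<le> length s" using cut_less[OF assms(4)] .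
  have w: "walk u s" using assms(1) by (simp add: valid_def)
  have lt: "lastv u (take ?i s) = tgt x"
    using lastv_take[OF c] cut_nth[OF assms(4)] by simp
  have w1: "walk (tgt x) (drop ?i s)"
    using w lt by (metis append_take_drop_id walk_append)
  have l1: "lastv (tgt x) (drop ?i s) = lastv u s"
    using lt by (metis append_take_drop_id lastv_append)
  have "walk (tgt x) (cyc u s x)"
    using w1 l1 assms(3) by (simp add: cyc_def walk_append)
  moreover have "set (cyc u s x) \<subseteq> A"
    using assms(1,2) unfolding valid_def cyc_def by (auto dest: in_set_dropD)
  moreover have "length (cyc u s x) \<le> card V"
  proof -
    have "length (cyc u s x) \<le> length (vs u s)" by (simp add: cyc_def)
    also have "\<dots> = card (set (vs u s))" using assms(1) by (simp add: valid_def distinct_card)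
    also have "\<dots> \<le> card V" using assms(1,5) by (simp add: valid_def card_mono)
    finally show ?thesis .
  qed
  ultimately show ?thesis by (simp add: cyc_def)
qed

lemma step_sum:
  "sum_list (map f s) + f x = sum_list (map f (step u s x))
     + (if closes u s x then sum_list (map f (cyc u s x)) else 0)"
proof (cases "closes u s x")
  case True
  have "sum_list (map f s) = sum_list (map f (take (cut u s x) s)) + sum_list (map f (drop (cut u s x) s))"
    by (metis append_take_drop_id map_append sum_list_append)
  then show ?thesis using True by (simp add: step_def cyc_def algebra_simps)
next
  case False then show ?thesis by (simp add: step_def)
qed



lemma play_lastv: "play E u e \<Longrightarrow> lastv u (map e [0..<n]) = fst (e n)"
  by (cases n) (auto simp: play_def lastv_def tgt_def)

lemma consistent_lift:
  "play E u e \<Longrightarrow> consistent P (lift \<sigma>) u e \<longleftrightarrow> (\<forall>n. fst (e n) \<in> P \<longrightarrow> e n = \<sigma> (fst (e n)))"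
  by (simp add: consistent_def lift_def play_lastv)

definition ST :: "'v \<Rightarrow> (nat \<Rightarrow> 'v edge) \<Rightarrow> nat \<Rightarrow> 'v edge list" where
  "ST u e n = stk u (map e [0..<n])"

lemma ST_0[simp]: "ST u e 0 = []" by (simp add: ST_def stk_def)
lemma ST_Suc: "ST u e (Suc n) = step u (ST u e n) (e n)"
  by (simp add: ST_def stk_snoc)

lemma play_stack:
  assumes "play E u e" "\<forall>n. e n \<in> A" "u \<in> V" "\<forall>n. tgt (e n) \<in> V"
  shows "valid A V u (ST u e n) \<and> lastv u (ST u e n) = fst (e n)"
proof (induction n)
  case 0
  have "fst (e 0) = u" using assms(1) by (simp add: play_def)
  then show ?case using valid_Nil[OF assms(3)] by simp
next
  case (Suc n)
  then have "valid A V u (ST u e (Suc n)) \<and> lastv u (ST u e (Suc n)) = tgt (e n)"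
    unfolding ST_Suc using assms by (intro step_valid) auto
  moreover have "tgt (e n) = fst (e (Suc n))" using assms(1) by (simp add: play_def tgt_def)
  ultimately show ?case by simp
qed

lemma play_sum:
  fixes f :: "'v edge \<Rightarrow> int"
  shows "(\<Sum>j<n. f (e j)) = sum_list (map f (ST u e n)) +
    (\<Sum>m<n. if closes u (ST u e m) (e m) then sum_list (map f (cyc u (ST u e m) (e m))) else 0)"
proof (induction n)
  case 0 then show ?case by simp
next
  case (Suc n)
  have "(\<Sum>j<Suc n. f (e j)) = (\<Sum>j<n. f (e j)) + f (e n)" by simp
  also have "\<dots> = sum_list (map f (ST u e n)) + f (e n) +
    (\<Sum>m<n. if closes u (ST u e m) (e m) then sum_list (map f (cyc u (ST u e m) (e m))) else 0)"
    using Suc by simp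
  also have "sum_list (map f (ST u e n)) + f (e n) = sum_list (map f (ST u e (Suc n)))
     + (if closes u (ST u e n) (e n) then sum_list (map f (cyc u (ST u e n) (e n))) else 0)"
    unfolding ST_Suc by (rule step_sum)
  finally show ?case by simp
qed

definition loopp :: "(nat \<Rightarrow> 'v edge) \<Rightarrow> nat \<Rightarrow> 'v edge list \<Rightarrow> nat \<Rightarrow> 'v edge" where
  "loopp e m c n = (if n \<le> m then e n else c ! ((n - Suc m) mod length c))"

lemma walk_cyc:
  assumes "walk y c" "lastv y c = y" "j < length c"
  shows "tgt (c ! j) = fst (c ! (Suc j mod length c))"
proof -
  have t: "tgt (c ! j) = vs y c ! Suc j" using assms(3) by (simp add: vs_def)
  show ?thesis
  proof (cases "Suc j < length c")
    case True
    then show ?thesis using t walk_nth[OF assms(1) True] by simp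
  next
    case False
    then have "Suc j = length c" using assms(3) by simp
    then have "vs y c ! Suc j = y" using assms(2) unfolding lastv_vs
      by (metis last_conv_nth length_vs diff_Suc_1 list.distinct(1) vs_def)
    moreover have "fst (c ! 0) = y" using walk_nth[OF assms(1), of 0] assms(3) by (force simp: vs_def)
    ultimately show ?thesis using t \<open>Suc j = length c\<close> by simp
  qed
qed

lemma loop_play:
  assumes "play E u e" "walk y c" "lastv y c = y" "c \<noteq> []" "tgt (e m) = y" "set c \<subseteq> E"
  shows "play E u (loopp e m c)"
  unfolding play_def
proof (intro conjI allI)
  fix n
  show "loopp e m c n \<in> E" using assms(1,4,6) by (auto simp: loopp_def play_def)
next
  show "fst (loopp e m c 0) = u" using assms(1) by (simp add: loopp_def play_def)
next
  fix n
  show "snd (snd (loopp e m c n)) = fst (loopp e m c (Suc n))"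
  proof (cases "n < m")
    case True then show ?thesis using assms(1) by (simp add: loopp_def play_def)
  next
    case False
    show ?thesis
    proof (cases "n = m")
      case True
      have "fst (c ! 0) = y" using walk_nth[OF assms(2), of 0] assms(4) by (simp add: vs_def)
      then show ?thesis using True assms(5) by (simp add: loopp_def tgt_def)
    next
      case False
      with \<open>\<not> n < m\<close> have nm: "n > m" by simp
      let ?j = "(n - Suc m) mod length c"
      have j: "?j < length c" using assms(4) by simp
      have "Suc n - Suc m = Suc (n - Suc m)" using nm by simp
      then have "(Suc n - Suc m) mod length c = Suc ?j mod length c" by (simp add: mod_Suc_eq)
      then show ?thesis using walk_cyc[OF assms(2,3) j] nm by (simp add: loopp_def tgt_def)
    qed
  qed
qed

lemma modsum:
  fixes g :: "nat \<Rightarrow> int"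
  assumes "L > 0"
  shows "(\<Sum>k<n. g (k mod L)) = int (n div L) * (\<Sum>k<L. g k) + (\<Sum>k<n mod L. g k)"
proof (induction n)
  case 0 then show ?case by simp
next
  case (Suc n)
  have IH: "(\<Sum>k<Suc n. g (k mod L)) = int (n div L) * (\<Sum>k<L. g k) + (\<Sum>k<n mod L. g k) + g (n mod L)"
    using Suc by simp
  show ?case
  proof (cases "Suc (n mod L) = L")
    case True
    have a: "Suc n mod L = 0" using True mod_Suc[of n L] by simp
    have b: "Suc n div L = Suc (n div L)" using a div_Suc[of n L] by simp
    have c: "(\<Sum>k<L. g k) = (\<Sum>k<n mod L. g k) + g (n mod L)"
      using True by (metis sum.lessThan_Suc)
    show ?thesis unfolding IH a b c by (simp add: algebra_simps)
  next
    case False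
    have a: "Suc n mod L = Suc (n mod L)" using False mod_Suc[of n L] by simp
    have b: "Suc n div L = n div L" using a div_Suc[of n L] by simp
    show ?thesis unfolding IH a b by simp
  qed
qed

lemma loop_sum:
  fixes f :: "'v edge \<Rightarrow> int"
  assumes "n \<ge> Suc m" "c \<noteq> []"
  shows "(\<Sum>j<n. f (loopp e m c j)) = (\<Sum>j<Suc m. f (e j))
     + int ((n - Suc m) div length c) * sum_list (map f c) + (\<Sum>k<(n - Suc m) mod length c. f (c ! k))"
proof -
  have split: "{..<n} = {..<Suc m} \<union> {Suc m..<n}" using assms(1) by auto
  have "(\<Sum>j<n. f (loopp e m c j)) = (\<Sum>j<Suc m. f (loopp e m c j)) + (\<Sum>j\<in>{Suc m..<n}. f (loopp e m c j))"
    unfolding split by (rule sum.union_disjoint) auto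
  also have "(\<Sum>j<Suc m. f (loopp e m c j)) = (\<Sum>j<Suc m. f (e j))"
    by (rule sum.cong) (auto simp: loopp_def)
  also have "(\<Sum>j\<in>{Suc m..<n}. f (loopp e m c j)) = (\<Sum>k<n - Suc m. f (c ! (k mod length c)))"
  proof -
    have "(\<Sum>j\<in>{Suc m..<n}. f (loopp e m c j)) = (\<Sum>k\<in>{0..<n - Suc m}. f (loopp e m c (k + Suc m)))"
    proof -
      have "{Suc m..<n} = {0 + Suc m..<(n - Suc m) + Suc m}" using assms(1) by simp
      then show ?thesis by (simp only: sum.shift_bounds_nat_ivl)
    qed
    also have "\<dots> = (\<Sum>k<n - Suc m. f (c ! (k mod length c)))"
      by (rule sum.cong) (auto simp: loopp_def)
    finally show ?thesis .
  qed
  also have "\<dots> = int ((n - Suc m) div length c) * (\<Sum>k<length c. f (c ! k)) + (\<Sum>k<(n - Suc m) mod length c. f (c ! k))"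
    using modsum[of "length c" "\<lambda>k. f (c ! k)"] assms(2) by simp
  also have "(\<Sum>k<length c. f (c ! k)) = sum_list (map f c)"
    by (simp add: sum_list_sum_nth atLeast0LessThan)
  finally show ?thesis by simp
qed



section \<open>Scalarisation\<close>

definition Mk :: "nat \<Rightarrow> nat \<Rightarrow> 'v edge set \<Rightarrow> nat \<Rightarrow> int" where
  "Mk k n E d = Max {\<bar>scal k n E d w'\<bar> | w'. \<exists>a b. (a, w', b) \<in> E}"

lemma scal_Suc': "scal (Suc k) n E d w = w (d - Suc k) * (int n * Mk k n E d + 1) + scal k n E d w"
  by (simp add: Mk_def)

lemma Mk_bound:
  assumes "finite E" "x \<in> E"
  shows "\<bar>scal k n E d (fst (snd x))\<bar> \<le> Mk k n E d"
proof -
  have eq: "{\<bar>scal k n E d w'\<bar> | w'. \<exists>a b. (a, w', b) \<in> E} = (\<lambda>x. \<bar>scal k n E d (fst (snd x))\<bar>) ` E"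
    by force
  have "finite {\<bar>scal k n E d w'\<bar> | w'. \<exists>a b. (a, w', b) \<in> E}" unfolding eq using assms(1) by simp
  moreover have "\<bar>scal k n E d (fst (snd x))\<bar> \<in> {\<bar>scal k n E d w'\<bar> | w'. \<exists>a b. (a, w', b) \<in> E}"
    using assms(2) by (cases x) auto
  ultimately show ?thesis unfolding Mk_def by (rule Max_ge)
qed

lemma sum_list_bound:
  fixes f :: "'a \<Rightarrow> int"
  assumes "\<forall>x\<in>set c. \<bar>f x\<bar> \<le> M"
  shows "\<bar>sum_list (map f c)\<bar> \<le> int (length c) * M"
  using assms
proof (induction c)
  case Nil then show ?case by simp
next
  case (Cons a c)
  then have "\<bar>f a\<bar> \<le> M" "\<bar>sum_list (map f c)\<bar> \<le> int (length c) * M" by auto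
  then show ?case by (simp add: algebra_simps)
qed

lemma sum_list_lin:
  fixes f g :: "'a \<Rightarrow> int"
  shows "sum_list (map (\<lambda>x. f x * Q + g x) c) = sum_list (map f c) * Q + sum_list (map g c)"
  by (induction c) (auto simp: algebra_simps)

fun lsg :: "nat \<Rightarrow> nat \<Rightarrow> (nat \<Rightarrow> int) \<Rightarrow> int" where
  "lsg d 0 x = sgn (x d)"
| "lsg d (Suc k) x = (if x (d - Suc k) \<noteq> 0 then sgn (x (d - Suc k)) else lsg d k x)"

definition xv :: "'v edge list \<Rightarrow> nat \<Rightarrow> int" where
  "xv c l = sum_list (map (\<lambda>x. fst (snd x) l) c)"

definition Tk :: "nat \<Rightarrow> nat \<Rightarrow> 'v edge set \<Rightarrow> nat \<Rightarrow> 'v edge list \<Rightarrow> int" where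
  "Tk k n E d c = sum_list (map (\<lambda>x. scal k n E d (fst (snd x))) c)"

lemma scal_sign:
  assumes "finite E" "set c \<subseteq> E" "length c \<le> n" "E \<noteq> {}"
  shows "sgn (Tk k n E d c) = lsg d k (xv c)"
proof (induction k)
  case 0 then show ?case by (simp add: Tk_def xv_def)
next
  case (Suc k)
  let ?M = "Mk k n E d"
  let ?a = "xv c (d - Suc k)"
  let ?T = "Tk k n E d c"
  have TS: "Tk (Suc k) n E d c = ?a * (int n * ?M + 1) + ?T"
    unfolding Tk_def xv_def scal_Suc' by (rule sum_list_lin)
  have M0: "?M \<ge> 0" if "x \<in> E" for x using Mk_bound[OF assms(1) that, of k n d] by simp
  have bT: "\<bar>?T\<bar> \<le> int (length c) * ?M" unfolding Tk_def
    using assms(1,2) by (intro sum_list_bound) (auto intro: Mk_bound)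
  have Mp: "?M \<ge> 0" using M0 assms(4) by auto
  have bT2: "\<bar>?T\<bar> \<le> int n * ?M"
  proof -
    have "int (length c) * ?M \<le> int n * ?M" using assms(3) Mp by (intro mult_right_mono) auto
    then show ?thesis using bT by linarith
  qed
  show ?case
  proof (cases "?a = 0")
    case True then show ?thesis using Suc TS by simp
  next
    case False
    show ?thesis
    proof (cases "?a > 0")
      case True
      then have "?a * (int n * ?M + 1) \<ge> int n * ?M + 1"
        using bT2 by (intro mult_right_mono[of 1 ?a, simplified]) auto
      then have "Tk (Suc k) n E d c > 0" using TS bT2 by linarith
      then show ?thesis using True by simp
    next
      case False
      then have neg: "?a \<le> -1" using \<open>?a \<noteq> 0\<close> by linarith
      have "?a * (int n * ?M + 1) \<le> -(int n * ?M + 1)"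
        using mult_right_mono[OF neg, of "int n * ?M + 1"] bT2 by auto
      then have "Tk (Suc k) n E d c < 0" using TS bT2 by linarith
      then show ?thesis using neg by simp
    qed
  qed
qed

definition lexnn :: "nat \<Rightarrow> (nat \<Rightarrow> int) \<Rightarrow> bool" where
  "lexnn d x \<longleftrightarrow> (\<forall>l\<in>{1..d}. x l < 0 \<longrightarrow> (\<exists>l'\<in>{1..<l}. x l' > 0))"
definition lexng :: "nat \<Rightarrow> (nat \<Rightarrow> int) \<Rightarrow> bool" where
  "lexng d x \<longleftrightarrow> (\<exists>l\<in>{1..d}. x l < 0 \<and> (\<forall>l'\<in>{1..<l}. x l' = 0))"

lemma lsg_lex:
  "k < d \<Longrightarrow> (lsg d k x \<ge> 0 \<longrightarrow> (\<forall>l\<in>{d-k..d}. x l < 0 \<longrightarrow> (\<exists>l'\<in>{d-k..<l}. x l' > 0)))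
     \<and> (lsg d k x < 0 \<longrightarrow> (\<exists>l\<in>{d-k..d}. x l < 0 \<and> (\<forall>l'\<in>{d-k..<l}. x l' = 0)))"
proof (induction k)
  case 0 then show ?case by (auto simp: sgn_if split: if_splits)
next
  case (Suc k)
  let ?i = "d - Suc k"
  have dk: "d - k = Suc ?i" using Suc.prems by simp
  have IH: "(lsg d k x \<ge> 0 \<longrightarrow> (\<forall>l\<in>{Suc ?i..d}. x l < 0 \<longrightarrow> (\<exists>l'\<in>{Suc ?i..<l}. x l' > 0)))
     \<and> (lsg d k x < 0 \<longrightarrow> (\<exists>l\<in>{Suc ?i..d}. x l < 0 \<and> (\<forall>l'\<in>{Suc ?i..<l}. x l' = 0)))"
    using Suc dk by simp
  have iv: "?i \<le> d" by simp
  show ?case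
  proof (cases "x ?i = 0")
    case False
    show ?thesis
    proof (intro conjI impI)
      assume "0 \<le> lsg d (Suc k) x"
      then have "x ?i > 0" using False by (simp add: sgn_if split: if_splits)
      show "\<forall>l\<in>{?i..d}. x l < 0 \<longrightarrow> (\<exists>l'\<in>{?i..<l}. x l' > 0)"
      proof (intro ballI impI)
        fix l assume l: "l \<in> {?i..d}" "x l < 0"
        then have "l \<noteq> ?i" using \<open>x ?i > 0\<close> by auto
        then have "?i \<in> {?i..<l}" using l by auto
        then show "\<exists>l'\<in>{?i..<l}. x l' > 0" using \<open>x ?i > 0\<close> by blast
      qed
    next
      assume "lsg d (Suc k) x < 0"
      then have "x ?i < 0" using False by (simp add: sgn_if split: if_splits)
      then show "\<exists>l\<in>{?i..d}. x l < 0 \<and> (\<forall>l'\<in>{?i..<l}. x l' = 0)"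
        using iv by (intro bexI[of _ ?i]) auto
    qed
  next
    case True
    then have ls: "lsg d (Suc k) x = lsg d k x" by simp
    show ?thesis
    proof (intro conjI impI)
      assume "0 \<le> lsg d (Suc k) x"
      then have g: "\<forall>l\<in>{Suc ?i..d}. x l < 0 \<longrightarrow> (\<exists>l'\<in>{Suc ?i..<l}. x l' > 0)"
        using IH ls by simp
      show "\<forall>l\<in>{?i..d}. x l < 0 \<longrightarrow> (\<exists>l'\<in>{?i..<l}. x l' > 0)"
      proof (intro ballI impI)
        fix l assume l: "l \<in> {?i..d}" "x l < 0"
        then have "l \<noteq> ?i" using True by auto
        then have "l \<in> {Suc ?i..d}" using l by auto
        then obtain l' where "l'\<in>{Suc ?i..<l}" "x l' > 0" using g l by blast
        then show "\<exists>l'\<in>{?i..<l}. x l' > 0" by (intro bexI[of _ l']) auto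
      qed
    next
      assume "lsg d (Suc k) x < 0"
      then obtain l where l: "l\<in>{Suc ?i..d}" "x l < 0" "\<forall>l'\<in>{Suc ?i..<l}. x l' = 0"
        using IH ls by auto
      have "\<forall>l'\<in>{?i..<l}. x l' = 0"
      proof
        fix l' assume "l' \<in> {?i..<l}"
        then show "x l' = 0" using True l(3) by (cases "l' = ?i") auto
      qed
      then show "\<exists>l\<in>{?i..d}. x l < 0 \<and> (\<forall>l'\<in>{?i..<l}. x l' = 0)" using l by auto
    qed
  qed
qed

lemma scal_lex:
  assumes "finite E" "set c \<subseteq> E" "length c \<le> n" "E \<noteq> {}" "d \<ge> 1"
  shows "(Tk (d - 1) n E d c \<ge> 0 \<longrightarrow> lexnn d (xv c)) \<and> (Tk (d - 1) n E d c < 0 \<longrightarrow> lexng d (xv c))"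
proof -
  have s: "sgn (Tk (d - 1) n E d c) = lsg d (d - 1) (xv c)" by (rule scal_sign[OF assms(1-4)])
  have e: "d - (d - 1) = 1" using assms(5) by simp
  have L: "(lsg d (d-1) (xv c) \<ge> 0 \<longrightarrow> (\<forall>l\<in>{1..d}. xv c l < 0 \<longrightarrow> (\<exists>l'\<in>{1..<l}. xv c l' > 0)))
     \<and> (lsg d (d-1) (xv c) < 0 \<longrightarrow> (\<exists>l\<in>{1..d}. xv c l < 0 \<and> (\<forall>l'\<in>{1..<l}. xv c l' = 0)))"
    using lsg_lex[of "d - 1" d "xv c"] assms(5) e by simp
  show ?thesis
  proof (intro conjI impI)
    assume "Tk (d - 1) n E d c \<ge> 0"
    then have "lsg d (d-1) (xv c) \<ge> 0" using s by (metis sgn_le_0_iff linorder_not_le sgn_less)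
    then show "lexnn d (xv c)" using L by (simp add: lexnn_def)
  next
    assume "Tk (d - 1) n E d c < 0"
    then have "lsg d (d-1) (xv c) < 0" using s by (metis sgn_less)
    then show "lexng d (xv c)" using L by (simp add: lexng_def)
  qed
qed



lemma liminf_avg_ge0:
  fixes S :: "nat \<Rightarrow> real"
  assumes "eventually (\<lambda>n. S n \<ge> -A) sequentially"
  shows "liminf (\<lambda>n. ereal (S n / real (Suc n))) \<ge> 0"
proof -
  have "(\<lambda>n. -A / real n) \<longlonglongrightarrow> 0" by (rule lim_const_over_n)
  then have "(\<lambda>n. -A / real (Suc n)) \<longlonglongrightarrow> 0" by (rule LIMSEQ_Suc)
  then have "(\<lambda>n. ereal (-A / real (Suc n))) \<longlonglongrightarrow> ereal 0" by (rule tendsto_ereal)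
  then have l: "liminf (\<lambda>n. ereal (-A / real (Suc n))) = ereal 0"
    by (rule lim_imp_Liminf[OF trivial_limit_sequentially])
  have "eventually (\<lambda>n. ereal (-A / real (Suc n)) \<le> ereal (S n / real (Suc n))) sequentially"
    using assms
  proof eventually_elim
    case (elim n)
    have "-A / real (Suc n) \<le> S n / real (Suc n)" using elim by (intro divide_right_mono) auto
    then show ?case by simp
  qed
  from Liminf_mono[OF this] l show ?thesis by (simp add: zero_ereal_def)
qed

lemma limsup_avg_le:
  fixes S :: "nat \<Rightarrow> real"
  assumes "eventually (\<lambda>n. S n \<le> A - c * real n) sequentially"
  shows "limsup (\<lambda>n. ereal (S n / real (Suc n))) \<le> ereal (-c)"
proof -
  have "(\<lambda>n. (A + c) / real n) \<longlonglongrightarrow> 0" by (rule lim_const_over_n)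
  then have "(\<lambda>n. (A + c) / real (Suc n)) \<longlonglongrightarrow> 0" by (rule LIMSEQ_Suc)
  then have "(\<lambda>n. (A + c) / real (Suc n) - c) \<longlonglongrightarrow> 0 - c" by (intro tendsto_diff) auto
  then have "(\<lambda>n. ereal ((A + c) / real (Suc n) - c)) \<longlonglongrightarrow> ereal (-c)" using tendsto_ereal by force
  then have l: "limsup (\<lambda>n. ereal ((A + c) / real (Suc n) - c)) = ereal (-c)"
    by (rule lim_imp_Limsup[OF trivial_limit_sequentially])
  have "eventually (\<lambda>n. ereal (S n / real (Suc n)) \<le> ereal ((A + c) / real (Suc n) - c)) sequentially"
    using assms
  proof eventually_elim
    case (elim n)
    have "(A + c) / real (Suc n) - c = (A - c * real n) / real (Suc n)"
      by (simp add: field_simps)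
    moreover have "S n / real (Suc n) \<le> (A - c * real n) / real (Suc n)" using elim by (intro divide_right_mono) auto
    ultimately show ?case by simp
  qed
  from Limsup_mono[OF this] l show ?thesis by simp
qed

lemma card_unbounded:
  fixes S :: "nat set"
  assumes "infinite S"
  shows "\<exists>n0. q \<le> card {m\<in>S. m \<le> n0}"
proof (induction q)
  case 0 then show ?case by simp
next
  case (Suc q)
  then obtain n0 where n0: "q \<le> card {m\<in>S. m \<le> n0}" by blast
  obtain m where m: "m > n0" "m \<in> S" using assms by (meson infinite_nat_iff_unbounded)
  have "{m\<in>S. m \<le> n0} \<subseteq> {m'\<in>S. m' \<le> m}" using m by auto
  moreover have "m \<notin> {m\<in>S. m \<le> n0}" "m \<in> {m'\<in>S. m' \<le> m}" using m by auto
  ultimately have "{m\<in>S. m \<le> n0} \<subset> {m'\<in>S. m' \<le> m}" by blast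
  then have "card {m\<in>S. m \<le> n0} < card {m'\<in>S. m' \<le> m}" by (intro psubset_card_mono) auto
  then show ?case using n0 by (intro exI[of _ m]) simp
qed

lemma sum_ge_card:
  fixes a :: "nat \<Rightarrow> int"
  assumes "\<forall>m\<ge>N. a m \<ge> 0"
  shows "(\<Sum>m\<le>n. a m) \<ge> -(\<Sum>m<N. \<bar>a m\<bar>) + int (card {m. N \<le> m \<and> m \<le> n \<and> a m > 0})"
proof -
  let ?A1 = "{..n} \<inter> {..<N}" and ?A2 = "{..n} - {..<N}"
  have split: "(\<Sum>m\<le>n. a m) = (\<Sum>m\<in>?A1. a m) + (\<Sum>m\<in>?A2. a m)"
    by (metis (no_types) finite_atMost sum.Int_Diff)
  have "(\<Sum>m\<in>?A1. a m) \<ge> (\<Sum>m\<in>?A1. -\<bar>a m\<bar>)" by (intro sum_mono) auto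
  moreover have "(\<Sum>m\<in>?A1. \<bar>a m\<bar>) \<le> (\<Sum>m<N. \<bar>a m\<bar>)" by (intro sum_mono2) auto
  moreover have "(\<Sum>m\<in>?A2. a m) \<ge> (\<Sum>m\<in>?A2. if a m > 0 then 1 else 0)"
    using assms by (intro sum_mono) auto
  moreover have "(\<Sum>m\<in>?A2. (if a m > 0 then 1 else 0::int)) = int (card {m\<in>?A2. a m > 0})"
    by (simp add: sum.If_cases Int_def)
  moreover have "{m\<in>?A2. a m > 0} = {m. N \<le> m \<and> m \<le> n \<and> a m > 0}" by auto
  ultimately show ?thesis using split by (simp add: sum_negf)
qed

lemma sum_to_infty:
  fixes a :: "nat \<Rightarrow> int"
  assumes "\<forall>m\<ge>N. a m \<ge> 0" "infinite {m. N \<le> m \<and> a m > 0}"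
  shows "eventually (\<lambda>n. R \<le> (\<Sum>m\<le>n. a m)) sequentially"
proof -
  let ?c = "(\<Sum>m<N. \<bar>a m\<bar>)"
  obtain n0 where n0: "nat (R + ?c) \<le> card {m\<in>{m. N \<le> m \<and> a m > 0}. m \<le> n0}"
    using card_unbounded[OF assms(2)] by blast
  show ?thesis unfolding eventually_sequentially
  proof (intro exI allI impI)
    fix n assume "n \<ge> n0"
    then have "{m\<in>{m. N \<le> m \<and> a m > 0}. m \<le> n0} \<subseteq> {m. N \<le> m \<and> m \<le> n \<and> a m > 0}" by auto
    then have "card {m\<in>{m. N \<le> m \<and> a m > 0}. m \<le> n0} \<le> card {m. N \<le> m \<and> m \<le> n \<and> a m > 0}"
      by (intro card_mono) auto
    then show "R \<le> (\<Sum>m\<le>n. a m)" using sum_ge_card[OF assms(1), of n] n0 by linarith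
  qed
qed

lemma sum_lower:
  fixes a :: "nat \<Rightarrow> int"
  assumes "\<forall>m\<ge>N. a m \<ge> 0"
  shows "(\<Sum>m\<le>n. a m) \<ge> -(\<Sum>m<N. \<bar>a m\<bar>)"
  using sum_ge_card[OF assms, of n] by linarith

lemma H1:
  fixes Y :: "nat \<Rightarrow> int"
  assumes "\<forall>R. eventually (\<lambda>n. R \<le> Y n) sequentially"
  shows "liminf (\<lambda>n. ereal (real_of_int (Y n))) = \<infinity>"
proof (rule ereal_top)
  fix B :: real
  have "eventually (\<lambda>n. \<lceil>B\<rceil> \<le> Y n) sequentially" using assms by blast
  then have "eventually (\<lambda>n. ereal B \<le> ereal (real_of_int (Y n))) sequentially"
    by eventually_elim (meson ereal_less_eq(3) le_of_int_ceiling of_int_le_iff order_trans)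
  then show "ereal B \<le> liminf (\<lambda>n. ereal (real_of_int (Y n)))" by (rule Liminf_bounded)
qed

lemma H4:
  fixes Y :: "nat \<Rightarrow> int"
  assumes "\<forall>R. eventually (\<lambda>n. Y n \<le> R) sequentially"
  shows "limsup (\<lambda>n. ereal (real_of_int (Y n))) = -\<infinity>"
proof (rule ereal_bot)
  fix B :: real
  have "eventually (\<lambda>n. Y n \<le> \<lfloor>B\<rfloor>) sequentially" using assms by blast
  then have "eventually (\<lambda>n. ereal (real_of_int (Y n)) \<le> ereal B) sequentially"
    by eventually_elim (meson ereal_less_eq(3) of_int_floor_le of_int_le_iff order_trans)
  then show "limsup (\<lambda>n. ereal (real_of_int (Y n))) \<le> ereal B" by (rule Limsup_bounded)
qed

lemma H2:
  fixes Y :: "nat \<Rightarrow> int"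
  assumes "eventually (\<lambda>n. c \<le> Y n) sequentially"
  shows "limsup (\<lambda>n. ereal (real_of_int (Y n))) \<noteq> -\<infinity>"
proof -
  have "eventually (\<lambda>n. ereal (real_of_int c) \<le> ereal (real_of_int (Y n))) sequentially"
    using assms by eventually_elim simp
  then have "ereal (real_of_int c) \<le> liminf (\<lambda>n. ereal (real_of_int (Y n)))" by (rule Liminf_bounded)
  also have "\<dots> \<le> limsup (\<lambda>n. ereal (real_of_int (Y n)))"
    by (rule Liminf_le_Limsup) simp
  finally show ?thesis by auto
qed

lemma H3:
  fixes Y :: "nat \<Rightarrow> int"
  assumes "eventually (\<lambda>n. Y n \<le> c) sequentially"
  shows "liminf (\<lambda>n. ereal (real_of_int (Y n))) < \<infinity>"
proof -
  have "eventually (\<lambda>n. ereal (real_of_int (Y n)) \<le> ereal (real_of_int c)) sequentially"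
    using assms by eventually_elim simp
  then have "limsup (\<lambda>n. ereal (real_of_int (Y n))) \<le> ereal (real_of_int c)" by (rule Limsup_bounded)
  moreover have "liminf (\<lambda>n. ereal (real_of_int (Y n))) \<le> limsup (\<lambda>n. ereal (real_of_int (Y n)))"
    by (rule Liminf_le_Limsup) simp
  ultimately have "liminf (\<lambda>n. ereal (real_of_int (Y n))) \<le> ereal (real_of_int c)" by (meson order_trans)
  then show ?thesis using order.strict_trans1 by fastforce
qed

lemma lex1:
  fixes X :: "nat \<Rightarrow> nat \<Rightarrow> int" and Cv :: "nat \<Rightarrow> nat \<Rightarrow> int"
  assumes nn: "\<forall>m. lexnn d (Cv m)"
    and bd: "\<forall>l\<in>{1..d}. \<exists>K. \<forall>n. \<bar>X l n - (\<Sum>m\<le>n. Cv m l)\<bar> \<le> K"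
  shows "\<not> (\<exists>k\<in>{1..d}. limsup (\<lambda>n. ereal (real_of_int (X k n))) = -\<infinity> \<and>
            (\<forall>l\<in>{1..<k}. liminf (\<lambda>n. ereal (real_of_int (X l n))) < \<infinity>))"
proof
  assume "\<exists>k\<in>{1..d}. limsup (\<lambda>n. ereal (real_of_int (X k n))) = -\<infinity> \<and>
            (\<forall>l\<in>{1..<k}. liminf (\<lambda>n. ereal (real_of_int (X l n))) < \<infinity>)"
  then obtain k where k: "k \<in> {1..d}" "limsup (\<lambda>n. ereal (real_of_int (X k n))) = -\<infinity>"
    "\<forall>l\<in>{1..<k}. liminf (\<lambda>n. ereal (real_of_int (X l n))) < \<infinity>" by blast
  have claim: "l < k \<Longrightarrow> \<exists>N. \<forall>m\<ge>N. \<forall>l'\<in>{1..l}. Cv m l' = 0" for l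
  proof (induction l)
    case 0 then show ?case by simp
  next
    case (Suc l)
    then obtain N where N: "\<forall>m\<ge>N. \<forall>l'\<in>{1..l}. Cv m l' = 0" by auto
    have ld: "Suc l \<in> {1..d}" using Suc.prems k(1) by auto
    have ge: "\<forall>m\<ge>N. Cv m (Suc l) \<ge> 0"
    proof (intro allI impI)
      fix m assume "m \<ge> N"
      show "Cv m (Suc l) \<ge> 0"
      proof (rule ccontr)
        assume "\<not> Cv m (Suc l) \<ge> 0"
        then obtain l' where "l' \<in> {1..<Suc l}" "Cv m l' > 0" using nn ld unfolding lexnn_def by force
        then show False using N \<open>m \<ge> N\<close> by auto
      qed
    qed
    have fin: "finite {m. N \<le> m \<and> Cv m (Suc l) > 0}"
    proof (rule ccontr)
      assume inf: "infinite {m. N \<le> m \<and> Cv m (Suc l) > 0}"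
      obtain K where K: "\<forall>n. \<bar>X (Suc l) n - (\<Sum>m\<le>n. Cv m (Suc l))\<bar> \<le> K" using bd ld by blast
      have "\<forall>R. eventually (\<lambda>n. R \<le> X (Suc l) n) sequentially"
      proof
        fix R
        show "eventually (\<lambda>n. R \<le> X (Suc l) n) sequentially"
          using sum_to_infty[OF ge inf, of "R + K"]
          by eventually_elim (use K in \<open>smt (verit)\<close>)
      qed
      from H1[OF this] have "liminf (\<lambda>n. ereal (real_of_int (X (Suc l) n))) = \<infinity>" .
      moreover have "Suc l \<in> {1..<k}" using Suc.prems by auto
      ultimately show False using k(3) by auto
    qed
    then obtain B where B: "\<forall>m\<in>{m. N \<le> m \<and> Cv m (Suc l) > 0}. m < B"
      by (meson finite_nat_set_iff_bounded)
    show ?case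
    proof (intro exI[of _ "max N B"] allI impI ballI)
      fix m l' assume m: "max N B \<le> m" and l': "l' \<in> {1..Suc l}"
      show "Cv m l' = 0"
      proof (cases "l' = Suc l")
        case True
        have "Cv m (Suc l) \<ge> 0" using ge m by auto
        moreover have "\<not> Cv m (Suc l) > 0" using B m by force
        ultimately show ?thesis using True by simp
      next
        case False then show ?thesis using N m l' by auto
      qed
    qed
  qed
  obtain N where N: "\<forall>m\<ge>N. \<forall>l'\<in>{1..k-1}. Cv m l' = 0" using claim[of "k - 1"] k(1) by auto
  have ge: "\<forall>m\<ge>N. Cv m k \<ge> 0"
  proof (intro allI impI)
    fix m assume "m \<ge> N"
    show "Cv m k \<ge> 0"
    proof (rule ccontr)
      assume "\<not> Cv m k \<ge> 0"
      then have "Cv m k < 0" by simp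
      then have "\<exists>l'\<in>{1..<k}. Cv m l' > 0" using nn k(1) unfolding lexnn_def by blast
      then obtain l' where "l' \<in> {1..<k}" "Cv m l' > 0" by blast
      then show False using N \<open>m \<ge> N\<close> by auto
    qed
  qed
  obtain K where K: "\<forall>n. \<bar>X k n - (\<Sum>m\<le>n. Cv m k)\<bar> \<le> K" using bd k(1) by blast
  have "eventually (\<lambda>n. -(\<Sum>m<N. \<bar>Cv m k\<bar>) - K \<le> X k n) sequentially"
    using sum_lower[OF ge] K by (smt (verit) always_eventually)
  from H2[OF this] k(2) show False by simp
qed

lemma lex2:
  fixes X :: "nat \<Rightarrow> nat \<Rightarrow> int" and Cv :: "nat \<Rightarrow> nat \<Rightarrow> int"
  assumes ng: "\<forall>m\<in>Pp. lexng d (Cv m)" and z: "\<forall>m. m \<notin> Pp \<longrightarrow> (\<forall>l. Cv m l = 0)"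
    and inf: "infinite Pp"
    and bd: "\<forall>l\<in>{1..d}. \<exists>K. \<forall>n. \<bar>X l n - (\<Sum>m\<le>n. Cv m l)\<bar> \<le> K"
  shows "\<exists>k\<in>{1..d}. limsup (\<lambda>n. ereal (real_of_int (X k n))) = -\<infinity> \<and>
            (\<forall>l\<in>{1..<k}. liminf (\<lambda>n. ereal (real_of_int (X l n))) < \<infinity>)"
proof -
  define ld where "ld m = (SOME l. l\<in>{1..d} \<and> Cv m l < 0 \<and> (\<forall>l'\<in>{1..<l}. Cv m l' = 0))" for m
  have ldp: "ld m \<in> {1..d} \<and> Cv m (ld m) < 0 \<and> (\<forall>l'\<in>{1..<ld m}. Cv m l' = 0)" if "m \<in> Pp" for m
  proof -
    have "\<exists>l. l\<in>{1..d} \<and> Cv m l < 0 \<and> (\<forall>l'\<in>{1..<l}. Cv m l' = 0)" using ng that unfolding lexng_def by blast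
    from someI_ex[OF this] show ?thesis unfolding ld_def .
  qed
  define K0 where "K0 = {l\<in>{1..d}. infinite {m\<in>Pp. ld m = l}}"
  have "Pp = (\<Union>l\<in>{1..d}. {m\<in>Pp. ld m = l})" using ldp by auto
  then have "K0 \<noteq> {}" using inf unfolding K0_def by (metis (no_types, lifting) empty_Collect_eq finite_UN finite_atLeastAtMost)
  moreover have "finite K0" unfolding K0_def by simp
  ultimately have kK: "Min K0 \<in> K0" by simp
  define k where "k = Min K0"
  have k1: "k \<in> {1..d}" and kinf: "infinite {m\<in>Pp. ld m = k}" using kK unfolding k_def K0_def by auto
  have lfin: "finite {m\<in>Pp. ld m = l}" if "l \<in> {1..<k}" for l
  proof (rule ccontr)
    assume "infinite {m\<in>Pp. ld m = l}"
    then have "l \<in> K0" using that k1 unfolding K0_def by auto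
    then have "k \<le> l" unfolding k_def using \<open>finite K0\<close> by simp
    then show False using that by simp
  qed
  have "finite (\<Union>l\<in>{1..<k}. {m\<in>Pp. ld m = l})" using lfin by auto
  then obtain N where N: "\<forall>m\<in>(\<Union>l\<in>{1..<k}. {m\<in>Pp. ld m = l}). m < N"
    by (meson finite_nat_set_iff_bounded)
  have ldk: "ld m \<ge> k" if "m \<in> Pp" "m \<ge> N" for m
  proof (rule ccontr)
    assume "\<not> ld m \<ge> k"
    then have "ld m \<in> {1..<k}" using ldp[OF that(1)] by auto
    then have "m \<in> (\<Union>l\<in>{1..<k}. {m\<in>Pp. ld m = l})" using that(1) by blast
    then show False using N that(2) by force
  qed
  have zl: "Cv m l = 0" if "m \<ge> N" "l \<in> {1..<k}" for m l
  proof (cases "m \<in> Pp")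
    case True then show ?thesis using ldp[OF True] ldk[OF True that(1)] that(2) by auto
  next
    case False then show ?thesis using z by auto
  qed
  have le: "Cv m k \<le> 0" if "m \<ge> N" for m
  proof (cases "m \<in> Pp")
    case True
    show ?thesis
    proof (cases "ld m = k")
      case True then show ?thesis using ldp[OF \<open>m \<in> Pp\<close>] by simp
    next
      case False then have "k \<in> {1..<ld m}" using ldk[OF True that] k1 by auto
      then show ?thesis using ldp[OF True] by auto
    qed
  next
    case False then show ?thesis using z by auto
  qed
  have ge: "\<forall>m\<ge>N. - Cv m k \<ge> 0" using le by auto
  have "{m\<in>Pp. ld m = k} - {..<N} \<subseteq> {m. N \<le> m \<and> - Cv m k > 0}" using ldp by auto
  moreover have "infinite ({m\<in>Pp. ld m = k} - {..<N})" using kinf by simp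
  ultimately have inf2: "infinite {m. N \<le> m \<and> - Cv m k > 0}" using finite_subset by blast
  obtain K where K: "\<forall>n. \<bar>X k n - (\<Sum>m\<le>n. Cv m k)\<bar> \<le> K" using bd k1 by blast
  have "\<forall>R. eventually (\<lambda>n. X k n \<le> R) sequentially"
  proof
    fix R
    show "eventually (\<lambda>n. X k n \<le> R) sequentially"
      using sum_to_infty[OF ge inf2, of "- R + K"]
      by eventually_elim (use K in \<open>auto simp: sum_negf\<close>, smt (verit))
  qed
  then have A: "limsup (\<lambda>n. ereal (real_of_int (X k n))) = -\<infinity>" by (rule H4)
  have B: "liminf (\<lambda>n. ereal (real_of_int (X l n))) < \<infinity>" if l: "l \<in> {1..<k}" for l
  proof -
    have ge': "\<forall>m\<ge>N. - Cv m l \<ge> 0" using zl l by auto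
    obtain K' where K': "\<forall>n. \<bar>X l n - (\<Sum>m\<le>n. Cv m l)\<bar> \<le> K'" using bd l k1 by force
    have "eventually (\<lambda>n. X l n \<le> (\<Sum>m<N. \<bar>Cv m l\<bar>) + K') sequentially"
      using sum_lower[OF ge'] K' by (simp add: sum_negf) (smt (verit) always_eventually)
    then show ?thesis by (rule H3)
  qed
  show ?thesis using A B k1 by blast
qed



inductive win :: "'v edge set \<Rightarrow> 'v set \<Rightarrow> ('v edge list \<Rightarrow> bool) \<Rightarrow> 'v \<Rightarrow> 'v edge list \<Rightarrow> bool"
  for E P G u where
  w1: "lastv u s \<in> P \<Longrightarrow> x \<in> E \<Longrightarrow> fst x = lastv u s \<Longrightarrow>
       (closes u s x \<and> G (cyc u s x)) \<or> (\<not> closes u s x \<and> win E P G u (step u s x)) \<Longrightarrow> win E P G u s"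
| w2: "lastv u s \<notin> P \<Longrightarrow>
       (\<forall>x\<in>E. fst x = lastv u s \<longrightarrow> (closes u s x \<and> G (cyc u s x)) \<or> (\<not> closes u s x \<and> win E P G u (step u s x)))
       \<Longrightarrow> win E P G u s"

definition okw :: "'v edge set \<Rightarrow> 'v set \<Rightarrow> ('v edge list \<Rightarrow> bool) \<Rightarrow> 'v \<Rightarrow> 'v edge list \<Rightarrow> 'v edge \<Rightarrow> bool" where
  "okw E P G u s x = ((closes u s x \<and> G (cyc u s x)) \<or> (\<not> closes u s x \<and> win E P G u (step u s x)))"

lemma win_in: "win E P G u s \<Longrightarrow> lastv u s \<in> P \<Longrightarrow> \<exists>x\<in>E. fst x = lastv u s \<and> okw E P G u s x"
  by (erule win.cases) (auto simp: okw_def)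

lemma win_out: "win E P G u s \<Longrightarrow> lastv u s \<notin> P \<Longrightarrow> x \<in> E \<Longrightarrow> fst x = lastv u s \<Longrightarrow> okw E P G u s x"
  by (erule win.cases) (auto simp: okw_def)

lemma win_det:
  assumes "finite V" "P \<inter> P' = {}" "V \<subseteq> P \<union> P'" "\<forall>x\<in>E. tgt x \<in> V"
  shows "distinct (vs u s) \<Longrightarrow> set (vs u s) \<subseteq> V \<Longrightarrow> win E P G u s \<or> win E P' (\<lambda>c. \<not> G c) u s"
proof (induction "card V - length s" arbitrary: s rule: less_induct)
  case less
  let ?cur = "lastv u s"
  have cur: "?cur \<in> V" using less.prems unfolding lastv_vs
    by (metis last_in_set list.distinct(1) subsetD vs_def)
  have IH: "win E P G u (step u s x) \<or> win E P' (\<lambda>c. \<not> G c) u (step u s x)"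
    if "x \<in> E" "\<not> closes u s x" for x
  proof -
    have st: "step u s x = s @ [x]" using that by (simp add: step_def)
    have v: "vs u (s @ [x]) = vs u s @ [tgt x]" by (simp add: vs_def)
    have d: "distinct (vs u (s @ [x]))" using less.prems(1) that(2) unfolding v by (simp add: closes_def)
    have sV: "set (vs u (s @ [x])) \<subseteq> V" using less.prems(2) assms(4) that(1) unfolding v by auto
    have "length (vs u (s @ [x])) \<le> card V"
      using d sV assms(1) by (metis card_mono distinct_card)
    then have "card V - length (s @ [x]) < card V - length s" by simp
    then show ?thesis using less.hyps d sV unfolding st by blast
  qed
  have flip: "okw E P' (\<lambda>c. \<not> G c) u s x" if "x \<in> E" "\<not> okw E P G u s x" for x
  proof (cases "closes u s x")
    case True then show ?thesis using that(2) unfolding okw_def by simp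
  next
    case False
    then have "\<not> win E P G u (step u s x)" using that(2) unfolding okw_def by simp
    then have "win E P' (\<lambda>c. \<not> G c) u (step u s x)" using IH[OF that(1) False] by simp
    then show ?thesis using False unfolding okw_def by simp
  qed
  show ?case
  proof (cases "?cur \<in> P")
    case True
    then have nP': "?cur \<notin> P'" using assms(2) by auto
    show ?thesis
    proof (cases "\<exists>x\<in>E. fst x = ?cur \<and> okw E P G u s x")
      case True
      then obtain x where "x \<in> E" "fst x = ?cur" "okw E P G u s x" by blast
      then show ?thesis using \<open>?cur \<in> P\<close> by (auto intro: w1 simp: okw_def)
    next
      case False
      then have "\<forall>x\<in>E. fst x = ?cur \<longrightarrow> okw E P' (\<lambda>c. \<not> G c) u s x" using flip by blast
      then show ?thesis using nP' by (auto intro: w2 simp: okw_def)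
    qed
  next
    case False
    then have P': "?cur \<in> P'" using assms(3) cur by auto
    show ?thesis
    proof (cases "\<forall>x\<in>E. fst x = ?cur \<longrightarrow> okw E P G u s x")
      case True
      then show ?thesis using False by (auto intro: w2 simp: okw_def)
    next
      case False
      then obtain x where "x \<in> E" "fst x = ?cur" "\<not> okw E P G u s x" by blast
      then have "okw E P' (\<lambda>c. \<not> G c) u s x" using flip by blast
      then show ?thesis using P' \<open>x \<in> E\<close> \<open>fst x = ?cur\<close> by (auto intro: w1 simp: okw_def)
    qed
  qed
qed

definition sstrat :: "'v edge set \<Rightarrow> 'v set \<Rightarrow> ('v edge list \<Rightarrow> bool) \<Rightarrow> 'v \<Rightarrow> 'v edge list \<Rightarrow> 'v edge" where
  "sstrat E P G u es = (if lastv u (stk u es) = lastv u es \<and> (\<exists>x\<in>E. fst x = lastv u es \<and> okw E P G u (stk u es) x)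
     then (SOME x. x\<in>E \<and> fst x = lastv u es \<and> okw E P G u (stk u es) x)
     else (SOME x. x\<in>E \<and> fst x = lastv u es))"

lemma sstrat_strategy:
  assumes "\<forall>a\<in>P. \<exists>x\<in>E. fst x = a"
  shows "strategy P E (sstrat E P G)"
  unfolding strategy_def
proof (intro allI impI)
  fix u es assume a: "lastv u es \<in> P"
  show "sstrat E P G u es \<in> E \<and> fst (sstrat E P G u es) = lastv u es"
  proof (cases "lastv u (stk u es) = lastv u es \<and> (\<exists>x\<in>E. fst x = lastv u es \<and> okw E P G u (stk u es) x)")
    case True
    then have "\<exists>x. x\<in>E \<and> fst x = lastv u es \<and> okw E P G u (stk u es) x" by blast
    moreover have "sstrat E P G u es = (SOME x. x\<in>E \<and> fst x = lastv u es \<and> okw E P G u (stk u es) x)"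
      unfolding sstrat_def by (rule if_P[OF True])
    ultimately show ?thesis using someI_ex[of "\<lambda>x. x\<in>E \<and> fst x = lastv u es \<and> okw E P G u (stk u es) x"] by simp
  next
    case False
    have "\<exists>x. x\<in>E \<and> fst x = lastv u es" using assms a by blast
    moreover have "sstrat E P G u es = (SOME x. x\<in>E \<and> fst x = lastv u es)"
      unfolding sstrat_def by (rule if_not_P[OF False])
    ultimately show ?thesis using someI_ex[of "\<lambda>x. x\<in>E \<and> fst x = lastv u es"] by simp
  qed
qed

lemma sstrat_inv:
  fixes n :: nat
  assumes pl: "play E u e" and co: "consistent P (sstrat E P G) u e" and w0: "win E P G u []"
    and uV: "u \<in> V" and tV: "\<forall>x\<in>E. tgt x \<in> V"
  shows "\<forall>i\<le>length (ST u e n). win E P G u (take i (ST u e n))"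
proof (induction n)
  case 0 then show ?case using w0 by simp
next
  case (Suc n)
  let ?s = "ST u e n"
  have eE: "\<forall>n. e n \<in> E" using pl by (simp add: play_def)
  have ps: "valid E V u ?s \<and> lastv u ?s = fst (e n)"
    using play_stack[OF pl eE uV] tV eE by blast
  have ws: "win E P G u ?s" using Suc by (metis order_refl take_all)
  have lv: "lastv u (map e [0..<n]) = fst (e n)" using play_lastv[OF pl] .
  have ok: "okw E P G u ?s (e n)"
  proof (cases "fst (e n) \<in> P")
    case True
    have en: "e n = sstrat E P G u (map e [0..<n])" using co True by (simp add: consistent_def)
    have ex: "\<exists>x\<in>E. fst x = lastv u ?s \<and> okw E P G u ?s x" using win_in[OF ws] True ps by simp
    have "stk u (map e [0..<n]) = ?s" by (simp add: ST_def)
    then have en2: "e n = (SOME x. x\<in>E \<and> fst x = fst (e n) \<and> okw E P G u ?s x)"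
      using en ex ps lv by (simp add: sstrat_def)
    have "\<exists>x. x\<in>E \<and> fst x = fst (e n) \<and> okw E P G u ?s x" using ex ps by (metis (no_types, lifting))
    from someI_ex[OF this] show ?thesis using en2 by simp
  next
    case False
    then show ?thesis using win_out[OF ws] ps eE by simp
  qed
  show ?case
  proof (cases "closes u ?s (e n)")
    case True
    then have "ST u e (Suc n) = take (cut u ?s (e n)) ?s" by (simp add: ST_Suc step_def)
    then show ?thesis using Suc by (simp add: min_def)
  next
    case False
    then have st: "ST u e (Suc n) = ?s @ [e n]" by (simp add: ST_Suc step_def)
    have w2: "win E P G u (?s @ [e n])" using ok False by (simp add: okw_def step_def)
    show ?thesis
    proof (intro allI impI)
      fix i assume "i \<le> length (ST u e (Suc n))"
      then show "win E P G u (take i (ST u e (Suc n)))"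
        unfolding st using Suc w2 by (cases "i \<le> length ?s") auto
    qed
  qed
qed

lemma sstrat_G:
  assumes pl: "play E u e" and co: "consistent P (sstrat E P G) u e" and w0: "win E P G u []"
    and uV: "u \<in> V" and tV: "\<forall>x\<in>E. tgt x \<in> V"
    and cl: "closes u (ST u e n) (e n)"
  shows "G (cyc u (ST u e n) (e n))"
proof -
  let ?s = "ST u e n"
  have eE: "\<forall>n. e n \<in> E" using pl by (simp add: play_def)
  have ps: "valid E V u ?s \<and> lastv u ?s = fst (e n)"
    using play_stack[OF pl eE uV] tV eE by blast
  have ws: "win E P G u ?s" using sstrat_inv[OF assms(1-5), of n] by (metis order_refl take_all)
  have lv: "lastv u (map e [0..<n]) = fst (e n)" using play_lastv[OF pl] .
  have ok: "okw E P G u ?s (e n)"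
  proof (cases "fst (e n) \<in> P")
    case True
    have en: "e n = sstrat E P G u (map e [0..<n])" using co True by (simp add: consistent_def)
    have ex: "\<exists>x\<in>E. fst x = lastv u ?s \<and> okw E P G u ?s x" using win_in[OF ws] True ps by simp
    have "stk u (map e [0..<n]) = ?s" by (simp add: ST_def)
    then have en2: "e n = (SOME x. x\<in>E \<and> fst x = fst (e n) \<and> okw E P G u ?s x)"
      using en ex ps lv by (simp add: sstrat_def)
    have "\<exists>x. x\<in>E \<and> fst x = fst (e n) \<and> okw E P G u ?s x" using ex ps by (metis (no_types, lifting))
    from someI_ex[OF this] show ?thesis using en2 by simp
  next
    case False
    then show ?thesis using win_out[OF ws] ps eE by simp
  qed
  then show ?thesis using cl by (simp add: okw_def)
qed



lemma gg_facts:
  assumes "game_graph V1 V2 E d"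
  shows "finite (V1 \<union> V2)" "finite E" "E \<noteq> {}" "d \<ge> 1" "V1 \<inter> V2 = {}"
    "\<forall>x\<in>E. fst x \<in> V1 \<union> V2 \<and> tgt x \<in> V1 \<union> V2" "\<forall>a\<in>V1 \<union> V2. \<exists>x\<in>E. fst x = a"
proof -
  note g = assms[unfolded game_graph_def]
  show "finite (V1 \<union> V2)" "finite E" "d \<ge> 1" "V1 \<inter> V2 = {}" using g by auto
  show "E \<noteq> {}" using g by blast
  show "\<forall>x\<in>E. fst x \<in> V1 \<union> V2 \<and> tgt x \<in> V1 \<union> V2"
  proof
    fix x assume "x \<in> E"
    moreover obtain a w b where "x = (a, w, b)" by (cases x) auto
    ultimately show "fst x \<in> V1 \<union> V2 \<and> tgt x \<in> V1 \<union> V2" using g by (auto simp: tgt_def)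
  qed
  show "\<forall>a\<in>V1 \<union> V2. \<exists>x\<in>E. fst x = a"
  proof
    fix a assume "a \<in> V1 \<union> V2"
    then obtain w b where "(a, w, b) \<in> E" using g by blast
    then show "\<exists>x\<in>E. fst x = a" by force
  qed
qed

lemma stack_bound:
  fixes f :: "'v edge \<Rightarrow> int"
  assumes "valid A V u s" "finite V" "\<forall>x\<in>A. \<bar>f x\<bar> \<le> M" "M \<ge> 0"
  shows "\<bar>sum_list (map f s)\<bar> \<le> int (card V) * M" "length s < card V"
proof -
  have "Suc (length s) = card (set (vs u s))" using assms(1) by (simp add: valid_def distinct_card)
  also have "\<dots> \<le> card V" using assms(1,2) by (simp add: valid_def card_mono)
  finally show l: "length s < card V" by simp
  have "\<bar>sum_list (map f s)\<bar> \<le> int (length s) * M"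
    using assms(1,3) unfolding valid_def by (intro sum_list_bound) auto
  also have "\<dots> \<le> int (card V) * M" using l assms(4) by (intro mult_right_mono) auto
  finally show "\<bar>sum_list (map f s)\<bar> \<le> int (card V) * M" .
qed

lemma avg_eq: "avg r e n = real_of_int (\<Sum>j<Suc n. r (fst (snd (e j)))) / real (Suc n)"
  by (simp add: avg_def lessThan_Suc_atMost)

lemma max_guar:
  fixes r :: "(nat \<Rightarrow> int) \<Rightarrow> int"
  defines "G \<equiv> (\<lambda>c. 0 \<le> sum_list (map (\<lambda>x. r (fst (snd x))) c))"
  assumes fin: "finite V" and uV: "u \<in> V" and tV: "\<forall>x\<in>E. tgt x \<in> V"
    and M: "\<forall>x\<in>E. \<bar>r (fst (snd x))\<bar> \<le> M" "M \<ge> 0"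
    and w0: "win E P G u []"
  shows "guar_max P E r (sstrat E P G) u \<ge> 0"
  unfolding guar_max_def
proof (rule Inf_greatest, clarify)
  fix e assume pl: "play E u e" and co: "consistent P (sstrat E P G) u e"
  let ?f = "\<lambda>x. r (fst (snd x))"
  have eE: "\<forall>n. e n \<in> E" using pl by (simp add: play_def)
  have "real_of_int (\<Sum>j<Suc n. ?f (e j)) \<ge> - real_of_int (int (card V) * M)" for n
  proof -
    let ?s = "ST u e (Suc n)"
    have v: "valid E V u ?s" using play_stack[OF pl eE uV] tV eE by blast
    have b: "\<bar>sum_list (map ?f ?s)\<bar> \<le> int (card V) * M" using stack_bound(1)[OF v fin M] .
    have "(\<Sum>m<Suc n. if closes u (ST u e m) (e m) then sum_list (map ?f (cyc u (ST u e m) (e m))) else 0) \<ge> 0"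
    proof (intro sum_nonneg)
      fix m
      show "0 \<le> (if closes u (ST u e m) (e m) then sum_list (map ?f (cyc u (ST u e m) (e m))) else 0)"
        using sstrat_G[OF pl co w0 uV tV, of m] unfolding G_def by auto
    qed
    then show ?thesis using play_sum[of ?f e "Suc n" u] b by linarith
  qed
  then have "eventually (\<lambda>n. real_of_int (\<Sum>j<Suc n. ?f (e j)) \<ge> - real_of_int (int (card V) * M)) sequentially"
    by simp
  from liminf_avg_ge0[OF this] show "0 \<le> liminf (\<lambda>n. ereal (avg r e n))" unfolding avg_eq .
qed

lemma min_guar:
  fixes r :: "(nat \<Rightarrow> int) \<Rightarrow> int"
  defines "G \<equiv> (\<lambda>c. \<not> 0 \<le> sum_list (map (\<lambda>x. r (fst (snd x))) c))"
  assumes fin: "finite V" and uV: "u \<in> V" and tV: "\<forall>x\<in>E. tgt x \<in> V"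
    and M: "\<forall>x\<in>E. \<bar>r (fst (snd x))\<bar> \<le> M" "M \<ge> 0"
    and w0: "win E P G u []"
  shows "guar_min P E r (sstrat E P G) u \<le> ereal (- (1 / real (card V)))"
  unfolding guar_min_def
proof (rule Sup_least, clarify)
  fix e assume pl: "play E u e" and co: "consistent P (sstrat E P G) u e"
  let ?f = "\<lambda>x. r (fst (snd x))"
  let ?N = "card V"
  have N0: "?N > 0" using fin uV card_gt_0_iff by blast
  have eE: "\<forall>n. e n \<in> E" using pl by (simp add: play_def)
  have key: "real_of_int (\<Sum>j<n. ?f (e j)) \<le> real_of_int (int ?N * M) + 1 - real n / real ?N" for n
  proof -
    let ?s = "ST u e n"
    have v: "valid E V u ?s" using play_stack[OF pl eE uV] tV eE by blast
    have b: "\<bar>sum_list (map ?f ?s)\<bar> \<le> int ?N * M" using stack_bound(1)[OF v fin M] .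
    have ls: "length ?s < ?N" using stack_bound(2)[OF v fin M] .
    define D where "D = (\<Sum>m<n. if closes u (ST u e m) (e m) then sum_list (map ?f (cyc u (ST u e m) (e m))) else 0)"
    define Lc where "Lc = (\<Sum>m<n. if closes u (ST u e m) (e m) then sum_list (map (\<lambda>_. 1::int) (cyc u (ST u e m) (e m))) else 0)"
    have s1: "(\<Sum>j<n. ?f (e j)) = sum_list (map ?f ?s) + D" unfolding D_def by (rule play_sum)
    have s2: "(\<Sum>j<n. (\<lambda>_. 1::int) (e j)) = sum_list (map (\<lambda>_. 1::int) ?s) + Lc" unfolding Lc_def by (rule play_sum)
    then have s2': "int n = int (length ?s) + Lc" by (simp add: sum_list_triv)
    have "int ?N * D \<le> - Lc"
    proof -
      have "int ?N * D = (\<Sum>m<n. int ?N * (if closes u (ST u e m) (e m) then sum_list (map ?f (cyc u (ST u e m) (e m))) else 0))"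
        unfolding D_def by (simp add: sum_distrib_left)
      also have "\<dots> \<le> (\<Sum>m<n. - (if closes u (ST u e m) (e m) then sum_list (map (\<lambda>_. 1::int) (cyc u (ST u e m) (e m))) else 0))"
      proof (intro sum_mono)
        fix m
        show "int ?N * (if closes u (ST u e m) (e m) then sum_list (map ?f (cyc u (ST u e m) (e m))) else 0)
              \<le> - (if closes u (ST u e m) (e m) then sum_list (map (\<lambda>_. 1::int) (cyc u (ST u e m) (e m))) else 0)"
        proof (cases "closes u (ST u e m) (e m)")
          case True
          let ?c = "cyc u (ST u e m) (e m)"
          have g: "sum_list (map ?f ?c) \<le> -1" using sstrat_G[OF pl co w0 uV tV True] unfolding G_def by simp
          have pm: "valid E V u (ST u e m) \<and> lastv u (ST u e m) = fst (e m)" using play_stack[OF pl eE uV] tV eE by blast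
          have lc: "length ?c \<le> ?N" using cyc_props[OF conjunct1[OF pm] eE[rule_format] sym[OF conjunct2[OF pm]] True fin] by blast
          have "int ?N * sum_list (map ?f ?c) \<le> int ?N * (-1)" using g N0 by (intro mult_left_mono) auto
          then show ?thesis using True lc by (simp add: sum_list_triv)
        qed simp
      qed
      also have "\<dots> = - Lc" unfolding Lc_def by (simp add: sum_negf)
      finally show ?thesis .
    qed
    then have "real_of_int (int ?N * D) \<le> real_of_int (- Lc)" by (simp only: of_int_le_iff)
    then have "real ?N * real_of_int D \<le> - real_of_int Lc" by simp
    then have "real_of_int D \<le> - real_of_int Lc / real ?N" using N0 by (simp add: field_simps)
    moreover have "real_of_int Lc = real n - real (length ?s)" using s2' by simp
    moreover have "real (length ?s) / real ?N \<le> 1" using ls by simp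
    ultimately have "real_of_int D \<le> 1 - real n / real ?N" using N0 by (simp add: field_simps)
    moreover have "real_of_int (sum_list (map ?f ?s)) \<le> real_of_int (int ?N * M)" using b by (simp only: of_int_le_iff abs_le_iff)
    ultimately show ?thesis unfolding s1 by simp
  qed
  have "eventually (\<lambda>n. real_of_int (\<Sum>j<Suc n. ?f (e j)) \<le> (real_of_int (int ?N * M) + 1) - (1 / real ?N) * real n) sequentially"
  proof (intro always_eventually allI)
    fix n
    have "real (Suc n) / real ?N \<ge> real n / real ?N" using N0 by (simp add: divide_right_mono)
    then show "real_of_int (\<Sum>j<Suc n. ?f (e j)) \<le> (real_of_int (int ?N * M) + 1) - (1 / real ?N) * real n"
      using key[of "Suc n"] by simp
  qed
  from limsup_avg_le[OF this] show "limsup (\<lambda>n. ereal (avg r e n)) \<le> ereal (- (1 / real ?N))"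
    unfolding avg_eq .
qed

lemma partial_bound:
  fixes f :: "'v edge \<Rightarrow> int"
  assumes "\<forall>x\<in>set c. \<bar>f x\<bar> \<le> M" "rr \<le> length c" "M \<ge> 0"
  shows "\<bar>\<Sum>k<rr. f (c ! k)\<bar> \<le> int (length c) * M"
proof -
  have M0: "M \<ge> 0" using assms(3) .
  have "\<bar>\<Sum>k<rr. f (c ! k)\<bar> \<le> (\<Sum>k<rr. \<bar>f (c ! k)\<bar>)" by (rule sum_abs)
  also have "\<dots> \<le> (\<Sum>k<rr. M)" using assms by (intro sum_mono) auto
  also have "\<dots> = int rr * M" by simp
  also have "\<dots> \<le> int (length c) * M" using assms(2) M0 by (intro mult_right_mono) auto
  finally show ?thesis .
qed

lemma loop_upper:
  fixes f :: "'v edge \<Rightarrow> int"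
  assumes c: "c \<noteq> []" and M: "\<forall>x\<in>set c. \<bar>f x\<bar> \<le> M" and M0: "M \<ge> 0" and neg: "sum_list (map f c) \<le> -1"
  shows "\<exists>A. eventually (\<lambda>n. real_of_int (\<Sum>j<Suc n. f (loopp e m c j)) \<le> A - (1 / real (length c)) * real n) sequentially"
proof -
  let ?L = "length c"
  let ?R0 = "(\<Sum>j<Suc m. f (e j))"
  have L0: "?L > 0" using c by simp
  define A where "A = real_of_int ?R0 + real_of_int (int ?L * M) + 1 + real m / real ?L"
  have "eventually (\<lambda>n. real_of_int (\<Sum>j<Suc n. f (loopp e m c j)) \<le> A - (1 / real ?L) * real n) sequentially"
    unfolding eventually_sequentially
  proof (intro exI allI impI)
    fix n assume nm: "m \<le> n"
    let ?q = "(n - m) div ?L" and ?r = "(n - m) mod ?L"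
    have ls: "(\<Sum>j<Suc n. f (loopp e m c j)) = ?R0 + int ?q * sum_list (map f c) + (\<Sum>k<?r. f (c ! k))"
      using loop_sum[of m "Suc n" c f e] nm c by simp
    have pb: "\<bar>\<Sum>k<?r. f (c ! k)\<bar> \<le> int ?L * M" using partial_bound[OF M _ M0, of ?r] L0 by simp
    have "int ?q * sum_list (map f c) \<le> int ?q * (-1)" using neg by (intro mult_left_mono) auto
    then have qb: "int ?q * sum_list (map f c) \<le> - int ?q" by simp
    have iv: "(\<Sum>j<Suc n. f (loopp e m c j)) \<le> ?R0 + int ?L * M - int ?q" using ls pb qb by linarith
    have dm: "n - m = ?q * ?L + ?r" by simp
    have "real (n - m) = real (?q * ?L + ?r)" by (simp only: dm[symmetric])
    then have "real (n - m) = real ?q * real ?L + real ?r" by (simp only: of_nat_add of_nat_mult)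
    then have "real (n - m) < real ?q * real ?L + real ?L" using L0 by simp
    then have "real (n - m) / real ?L < real ?q + 1" using L0 by (simp add: field_simps)
    moreover have "real (n - m) = real n - real m" using nm by simp
    ultimately have "real ?q > (real n - real m) / real ?L - 1" by simp
    moreover have "(real n - real m) / real ?L = real n / real ?L - real m / real ?L" by (simp add: diff_divide_distrib)
    ultimately have "real ?q > real n / real ?L - real m / real ?L - 1" by simp
    moreover have "real_of_int (\<Sum>j<Suc n. f (loopp e m c j)) \<le> real_of_int ?R0 + real_of_int (int ?L * M) - real ?q"
    proof -
      have "real_of_int (\<Sum>j<Suc n. f (loopp e m c j)) \<le> real_of_int (?R0 + int ?L * M - int ?q)"
        using iv by (simp only: of_int_le_iff)
      then show ?thesis by simp
    qed
    ultimately show "real_of_int (\<Sum>j<Suc n. f (loopp e m c j)) \<le> A - (1 / real ?L) * real n"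
      unfolding A_def by simp
  qed
  then show ?thesis by blast
qed

lemma loop_lower:
  fixes f :: "'v edge \<Rightarrow> int"
  assumes c: "c \<noteq> []" and M: "\<forall>x\<in>set c. \<bar>f x\<bar> \<le> M" and M0: "M \<ge> 0" and pos: "sum_list (map f c) \<ge> 0"
  shows "\<exists>A. eventually (\<lambda>n. real_of_int (\<Sum>j<Suc n. f (loopp e m c j)) \<ge> - A) sequentially"
proof -
  let ?L = "length c"
  let ?R0 = "(\<Sum>j<Suc m. f (e j))"
  have L0: "?L > 0" using c by simp
  have "eventually (\<lambda>n. real_of_int (\<Sum>j<Suc n. f (loopp e m c j)) \<ge> - (- real_of_int ?R0 + real_of_int (int ?L * M))) sequentially"
    unfolding eventually_sequentially
  proof (intro exI allI impI)
    fix n assume nm: "m \<le> n"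
    let ?q = "(n - m) div ?L" and ?r = "(n - m) mod ?L"
    have ls: "(\<Sum>j<Suc n. f (loopp e m c j)) = ?R0 + int ?q * sum_list (map f c) + (\<Sum>k<?r. f (c ! k))"
      using loop_sum[of m "Suc n" c f e] nm c by simp
    have pb: "\<bar>\<Sum>k<?r. f (c ! k)\<bar> \<le> int ?L * M" using partial_bound[OF M _ M0, of ?r] L0 by simp
    have qb: "int ?q * sum_list (map f c) \<ge> 0" using pos by simp
    have "(\<Sum>j<Suc n. f (loopp e m c j)) \<ge> ?R0 - int ?L * M" using ls pb qb by linarith
    then show "real_of_int (\<Sum>j<Suc n. f (loopp e m c j)) \<ge> - (- real_of_int ?R0 + real_of_int (int ?L * M))"
    proof -
      have "real_of_int (?R0 - int ?L * M) \<le> real_of_int (\<Sum>j<Suc n. f (loopp e m c j))"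
        using \<open>(\<Sum>j<Suc n. f (loopp e m c j)) \<ge> ?R0 - int ?L * M\<close> by (simp only: of_int_le_iff)
      then show ?thesis by simp
    qed
  qed
  then show ?thesis by blast
qed



lemma lex_bd:
  assumes pl: "play E u e" and uV: "u \<in> V" and fin: "finite V" and finE: "finite E"
    and tV: "\<forall>x\<in>E. tgt x \<in> V"
  shows "\<exists>K. \<forall>n. \<bar>(\<Sum>j\<le>n. fst (snd (e j)) l)
      - (\<Sum>m\<le>n. (if closes u (ST u e m) (e m) then xv (cyc u (ST u e m) (e m)) l else 0))\<bar> \<le> K"
proof -
  let ?f = "\<lambda>x::'a edge. fst (snd x) l"
  define B where "B = (\<Sum>x\<in>E. \<bar>?f x\<bar>)"
  have fB: "\<forall>x\<in>E. \<bar>?f x\<bar> \<le> B" unfolding B_def using finE by (auto intro: member_le_sum)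
  have B0: "B \<ge> 0" unfolding B_def by (simp add: sum_nonneg)
  have eE: "\<forall>n. e n \<in> E" using pl by (simp add: play_def)
  show ?thesis
  proof (intro exI allI)
    fix n
    have v: "valid E V u (ST u e (Suc n))" using play_stack[OF pl eE uV] tV eE by blast
    have b: "\<bar>sum_list (map ?f (ST u e (Suc n)))\<bar> \<le> int (card V) * B" using stack_bound(1)[OF v fin fB B0] .
    have ps: "(\<Sum>j<Suc n. ?f (e j)) = sum_list (map ?f (ST u e (Suc n))) +
      (\<Sum>m<Suc n. if closes u (ST u e m) (e m) then sum_list (map ?f (cyc u (ST u e m) (e m))) else 0)"
      by (rule play_sum)
    show "\<bar>(\<Sum>j\<le>n. ?f (e j)) - (\<Sum>m\<le>n. (if closes u (ST u e m) (e m) then xv (cyc u (ST u e m) (e m)) l else 0))\<bar>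
          \<le> int (card V) * B"
    proof -
      have xeq: "\<And>c. xv c l = sum_list (map ?f c)" by (simp add: xv_def)
      show ?thesis using ps b unfolding xeq by (simp add: lessThan_Suc_atMost)
    qed
  qed
qed

lemma psum_eq: "psum e l = (\<lambda>n. ereal (real_of_int (\<Sum>j\<le>n. fst (snd (e j)) l)))"
  by (simp add: psum_def fun_eq_iff)

lemma liminf_le_limsup_seq: "liminf (f :: nat \<Rightarrow> ereal) \<le> limsup f"
  by (rule Liminf_le_Limsup) simp

lemma common_facts:
  assumes gg: "game_graph V1 V2 E d"
  shows "\<forall>x\<in>E. \<bar>mpw (V1 \<union> V2) E d (fst (snd x))\<bar> \<le> Mk (d - 1) (card (V1 \<union> V2)) E d"
    "Mk (d - 1) (card (V1 \<union> V2)) E d \<ge> 0"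
    "\<And>c. Tk (d - 1) (card (V1 \<union> V2)) E d c = sum_list (map (\<lambda>x. mpw (V1 \<union> V2) E d (fst (snd x))) c)"
proof -
  note gf = gg_facts[OF gg]
  show M: "\<forall>x\<in>E. \<bar>mpw (V1 \<union> V2) E d (fst (snd x))\<bar> \<le> Mk (d - 1) (card (V1 \<union> V2)) E d"
    unfolding mpw_def using Mk_bound[OF gf(2)] by blast
  obtain x where "x \<in> E" using gf(3) by blast
  then show "Mk (d - 1) (card (V1 \<union> V2)) E d \<ge> 0" using M by force
  show "\<And>c. Tk (d - 1) (card (V1 \<union> V2)) E d c = sum_list (map (\<lambda>x. mpw (V1 \<union> V2) E d (fst (snd x))) c)"
    by (simp add: Tk_def mpw_def)
qed

lemma part1:
  assumes gg: "game_graph V1 V2 E d" and vV: "v \<in> V1 \<union> V2"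
    and mv: "mp_value V1 E (mpw (V1 \<union> V2) E d) v \<ge> 0"
    and pos: "positional V1 E \<sigma>" and opt: "optimal_max V1 V2 E (mpw (V1 \<union> V2) E d) (lift \<sigma>)"
  shows "winning1 V1 E d (lift \<sigma>) v"
proof -
  define V where "V = V1 \<union> V2"
  define r where "r = mpw V E d"
  define f where "f = (\<lambda>x::'a edge. r (fst (snd x)))"
  define N where "N = card V"
  define M where "M = Mk (d - 1) N E d"
  note gf = gg_facts[OF gg, folded V_def]
  note cf = common_facts[OF gg, folded V_def, folded N_def, folded M_def r_def, folded f_def]
  have tV: "\<forall>x\<in>E. tgt x \<in> V" using gf(6) by blast
  have vV': "v \<in> V" using vV V_def by simp
  have "mp_value V1 E r v \<le> guar_max V1 E r (lift \<sigma>) v"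
    unfolding mp_value_def
  proof (rule Sup_least, clarify)
    fix \<sigma>' assume "strategy V1 E \<sigma>'"
    then show "guar_max V1 E r \<sigma>' v \<le> guar_max V1 E r (lift \<sigma>) v"
      using opt vV unfolding optimal_max_def r_def V_def by blast
  qed
  then have gm: "guar_max V1 E r (lift \<sigma>) v \<ge> 0" using mv unfolding r_def V_def by simp
  have LI: "liminf (\<lambda>n. ereal (avg r e' n)) \<ge> 0" if "play E v e'" "consistent V1 (lift \<sigma>) v e'" for e'
  proof -
    have "guar_max V1 E r (lift \<sigma>) v \<le> liminf (\<lambda>n. ereal (avg r e' n))"
      unfolding guar_max_def using that by (intro Inf_lower) blast
    then show ?thesis using gm by simp
  qed
  show ?thesis unfolding winning1_def
  proof (intro allI impI, elim conjE)
    fix e assume pl: "play E v e" and co: "consistent V1 (lift \<sigma>) v e"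
    define A where "A = {x\<in>E. fst x \<in> V1 \<longrightarrow> x = \<sigma> (fst x)}"
    have eE: "\<forall>n. e n \<in> E" using pl by (simp add: play_def)
    have eA: "\<forall>n. e n \<in> A" using co eE unfolding consistent_lift[OF pl] A_def by auto
    have AE: "A \<subseteq> E" unfolding A_def by auto
    define Cv where "Cv = (\<lambda>m l. if closes v (ST v e m) (e m) then xv (cyc v (ST v e m) (e m)) l else 0)"
    have nn: "lexnn d (Cv m)" for m
    proof (cases "closes v (ST v e m) (e m)")
      case False then show ?thesis by (simp add: Cv_def lexnn_def)
    next
      case True
      let ?c = "cyc v (ST v e m) (e m)"
      have pm: "valid A V v (ST v e m) \<and> lastv v (ST v e m) = fst (e m)"
        using play_stack[OF pl eA vV'] tV eE by blast
      have cp: "walk (tgt (e m)) ?c \<and> lastv (tgt (e m)) ?c = tgt (e m) \<and> set ?c \<subseteq> A \<and> length ?c \<le> card V \<and> ?c \<noteq> []"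
        using cyc_props[OF conjunct1[OF pm] eA[rule_format] sym[OF conjunct2[OF pm]] True gf(1)] .
      have cE: "set ?c \<subseteq> E" using cp AE by blast
      have sp: "sum_list (map f ?c) \<ge> 0"
      proof (rule ccontr)
        assume "\<not> sum_list (map f ?c) \<ge> 0"
        then have neg: "sum_list (map f ?c) \<le> -1" by simp
        let ?e' = "loopp e m ?c"
        have pl': "play E v ?e'" using loop_play[OF pl _ _ _ refl cE] cp by blast
        have co': "consistent V1 (lift \<sigma>) v ?e'"
          unfolding consistent_lift[OF pl']
        proof (intro allI impI)
          fix n assume "fst (?e' n) \<in> V1"
          moreover have "?e' n \<in> A"
          proof (cases "n \<le> m")
            case True then show ?thesis using eA by (simp add: loopp_def)
          next
            case False
            have "?c ! ((n - Suc m) mod length ?c) \<in> set ?c" using cp by simp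
            then show ?thesis using False cp by (auto simp: loopp_def)
          qed
          ultimately show "?e' n = \<sigma> (fst (?e' n))" unfolding A_def by blast
        qed
        have fc: "\<forall>x\<in>set ?c. \<bar>f x\<bar> \<le> M" using cf(1) cE unfolding f_def by blast
        obtain A' where A': "eventually (\<lambda>n. real_of_int (\<Sum>j<Suc n. f (?e' j)) \<le> A' - (1 / real (length ?c)) * real n) sequentially"
          using loop_upper[of ?c f M e m] cp fc cf(2) neg by blast
        have L0: "length ?c > 0" using cp by simp
        have "limsup (\<lambda>n. ereal (avg r ?e' n)) \<le> ereal (- (1 / real (length ?c)))"
          unfolding avg_eq using limsup_avg_le[OF A'] unfolding f_def .
        moreover have "liminf (\<lambda>n. ereal (avg r ?e' n)) \<le> limsup (\<lambda>n. ereal (avg r ?e' n))"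
          by (rule liminf_le_limsup_seq)
        moreover have "liminf (\<lambda>n. ereal (avg r ?e' n)) \<ge> 0" using LI[OF pl' co'] .
        ultimately have "0 \<le> ereal (- (1 / real (length ?c)))" by (meson order_trans)
        then show False using L0 by simp
      qed
      have "Tk (d - 1) N E d ?c \<ge> 0" using sp cf(3) by simp
      then have "lexnn d (xv ?c)" using scal_lex[OF gf(2) cE _ gf(3) gf(4), of N] cp N_def by blast
      then show ?thesis using True by (simp add: Cv_def)
    qed
    have bd: "\<forall>l\<in>{1..d}. \<exists>K. \<forall>n. \<bar>(\<Sum>j\<le>n. fst (snd (e j)) l) - (\<Sum>m\<le>n. Cv m l)\<bar> \<le> K"
      using lex_bd[OF pl vV' gf(1) gf(2) tV] unfolding Cv_def by blast
    from lex1[of d Cv "\<lambda>l n. (\<Sum>j\<le>n. fst (snd (e j)) l)", OF allI[OF nn] bd]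
    show "lex_win1 d e" unfolding lex_win1_def lex_win2_def psum_eq by simp
  qed
qed

lemma sum_bounded_after:
  fixes g :: "nat \<Rightarrow> int"
  assumes "\<forall>m. g m \<ge> 0" "\<forall>m\<ge>B. g m = 0"
  shows "(\<Sum>m<n. g m) \<le> (\<Sum>m<B. g m)"
proof (induction n)
  case 0 then show ?case using assms(1) by (simp add: sum_nonneg)
next
  case (Suc n)
  show ?case
  proof (cases "n \<ge> B")
    case True then show ?thesis using Suc assms(2) by simp
  next
    case False
    then have "{..<Suc n} \<subseteq> {..<B}" by auto
    then show ?thesis using assms(1) by (intro sum_mono2) auto
  qed
qed

lemma part2:
  assumes gg: "game_graph V1 V2 E d" and vV: "v \<in> V1 \<union> V2"
    and mv: "mp_value V1 E (mpw (V1 \<union> V2) E d) v < 0"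
    and pos: "positional V2 E \<tau>" and opt: "optimal_min V1 V2 E (mpw (V1 \<union> V2) E d) (lift \<tau>)"
  shows "winning2 V2 E d (lift \<tau>) v"
proof -
  define V where "V = V1 \<union> V2"
  define r where "r = mpw V E d"
  define f where "f = (\<lambda>x::'a edge. r (fst (snd x)))"
  define N where "N = card V"
  define M where "M = Mk (d - 1) N E d"
  note gf = gg_facts[OF gg, folded V_def]
  note cf = common_facts[OF gg, folded V_def, folded N_def, folded M_def r_def, folded f_def]
  have tV: "\<forall>x\<in>E. tgt x \<in> V" using gf(6) by blast
  have vV': "v \<in> V" using vV V_def by simp
  have rM: "\<forall>x\<in>E. \<bar>r (fst (snd x))\<bar> \<le> M" using cf(1) by blast
  have N0: "N > 0" using gf(1) vV' N_def card_gt_0_iff by blast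
  define Gm where "Gm = (\<lambda>c::'a edge list. 0 \<le> sum_list (map (\<lambda>x. r (fst (snd x))) c))"
  have gneg: "guar_min V2 E r (lift \<tau>) v < 0"
  proof -
    have "distinct (vs v [])" "set (vs v []) \<subseteq> V" using vV' by (auto simp: vs_def)
    moreover have "V \<subseteq> V1 \<union> V2" by (simp add: V_def)
    ultimately have "win E V1 Gm v [] \<or> win E V2 (\<lambda>c. \<not> Gm c) v []"
      using win_det[OF gf(1) gf(5) _ tV, of v "[]" Gm] by simp
    then show ?thesis
    proof
      assume w: "win E V1 Gm v []"
      have "guar_max V1 E r (sstrat E V1 Gm) v \<ge> 0"
        using max_guar[OF gf(1) vV' tV rM cf(2) w[unfolded Gm_def]] unfolding Gm_def .
      moreover have "\<forall>a\<in>V1. \<exists>x\<in>E. fst x = a" using gf(7) V_def by blast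
      then have "strategy V1 E (sstrat E V1 Gm)" by (rule sstrat_strategy)
      ultimately have "mp_value V1 E r v \<ge> 0"
        unfolding mp_value_def by (intro Sup_upper2[of "guar_max V1 E r (sstrat E V1 Gm) v"]) blast+
      then show ?thesis using mv unfolding r_def V_def by simp
    next
      assume w: "win E V2 (\<lambda>c. \<not> Gm c) v []"
      have g1: "guar_min V2 E r (sstrat E V2 (\<lambda>c. \<not> Gm c)) v \<le> ereal (- (1 / real N))"
        using min_guar[OF gf(1) vV' tV rM cf(2) w[unfolded Gm_def]] unfolding Gm_def N_def .
      have "\<forall>a\<in>V2. \<exists>x\<in>E. fst x = a" using gf(7) V_def by blast
      then have "strategy V2 E (sstrat E V2 (\<lambda>c. \<not> Gm c))" by (rule sstrat_strategy)
      moreover have "\<forall>\<tau>'. strategy V2 E \<tau>' \<longrightarrow> guar_min V2 E r (lift \<tau>) v \<le> guar_min V2 E r \<tau>' v"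
        using opt vV unfolding optimal_min_def r_def V_def by blast
      ultimately have "guar_min V2 E r (lift \<tau>) v \<le> guar_min V2 E r (sstrat E V2 (\<lambda>c. \<not> Gm c)) v"
        by blast
      also have "\<dots> \<le> ereal (- (1 / real N))" using g1 .
      also have "\<dots> < 0" using N0 by simp
      finally show ?thesis .
    qed
  qed
  have LS: "limsup (\<lambda>n. ereal (avg r e' n)) < 0" if "play E v e'" "consistent V2 (lift \<tau>) v e'" for e'
  proof -
    have "limsup (\<lambda>n. ereal (avg r e' n)) \<le> guar_min V2 E r (lift \<tau>) v"
      unfolding guar_min_def using that by (intro Sup_upper) blast
    then show ?thesis using gneg by simp
  qed
  show ?thesis unfolding winning2_def
  proof (intro allI impI, elim conjE)
    fix e assume pl: "play E v e" and co: "consistent V2 (lift \<tau>) v e"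
    define A where "A = {x\<in>E. fst x \<in> V2 \<longrightarrow> x = \<tau> (fst x)}"
    have eE: "\<forall>n. e n \<in> E" using pl by (simp add: play_def)
    have eA: "\<forall>n. e n \<in> A" using co eE unfolding consistent_lift[OF pl] A_def by auto
    have AE: "A \<subseteq> E" unfolding A_def by auto
    define Cv where "Cv = (\<lambda>m l. if closes v (ST v e m) (e m) then xv (cyc v (ST v e m) (e m)) l else 0)"
    define Pp where "Pp = {m. closes v (ST v e m) (e m)}"
    have ng: "lexng d (Cv m)" if "m \<in> Pp" for m
    proof -
      have True: "closes v (ST v e m) (e m)" using that Pp_def by simp
      let ?c = "cyc v (ST v e m) (e m)"
      have pm: "valid A V v (ST v e m) \<and> lastv v (ST v e m) = fst (e m)"
        using play_stack[OF pl eA vV'] tV eE by blast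
      have cp: "walk (tgt (e m)) ?c \<and> lastv (tgt (e m)) ?c = tgt (e m) \<and> set ?c \<subseteq> A \<and> length ?c \<le> card V \<and> ?c \<noteq> []"
        using cyc_props[OF conjunct1[OF pm] eA[rule_format] sym[OF conjunct2[OF pm]] True gf(1)] .
      have cE: "set ?c \<subseteq> E" using cp AE by blast
      have sp: "sum_list (map f ?c) < 0"
      proof (rule ccontr)
        assume "\<not> sum_list (map f ?c) < 0"
        then have nn: "sum_list (map f ?c) \<ge> 0" by simp
        let ?e' = "loopp e m ?c"
        have pl': "play E v ?e'" using loop_play[OF pl _ _ _ refl cE] cp by blast
        have co': "consistent V2 (lift \<tau>) v ?e'"
          unfolding consistent_lift[OF pl']
        proof (intro allI impI)
          fix n assume "fst (?e' n) \<in> V2"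
          moreover have "?e' n \<in> A"
          proof (cases "n \<le> m")
            case True then show ?thesis using eA by (simp add: loopp_def)
          next
            case False
            have "?c ! ((n - Suc m) mod length ?c) \<in> set ?c" using cp by simp
            then show ?thesis using False cp by (auto simp: loopp_def)
          qed
          ultimately show "?e' n = \<tau> (fst (?e' n))" unfolding A_def by blast
        qed
        have fc: "\<forall>x\<in>set ?c. \<bar>f x\<bar> \<le> M" using cf(1) cE unfolding f_def by blast
        obtain A' where A': "eventually (\<lambda>n. real_of_int (\<Sum>j<Suc n. f (?e' j)) \<ge> - A') sequentially"
          using loop_lower[of ?c f M e m] cp fc cf(2) nn by blast
        have "liminf (\<lambda>n. ereal (avg r ?e' n)) \<ge> 0"
          unfolding avg_eq using liminf_avg_ge0[OF A'] unfolding f_def .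
        moreover have "liminf (\<lambda>n. ereal (avg r ?e' n)) \<le> limsup (\<lambda>n. ereal (avg r ?e' n))"
          by (rule liminf_le_limsup_seq)
        moreover have "limsup (\<lambda>n. ereal (avg r ?e' n)) < 0" using LS[OF pl' co'] .
        ultimately show False by simp
      qed
      have "Tk (d - 1) N E d ?c < 0" using sp cf(3) by simp
      then have "lexng d (xv ?c)" using scal_lex[OF gf(2) cE _ gf(3) gf(4), of N] cp N_def by blast
      then show ?thesis using True by (simp add: Cv_def)
    qed
    have z: "\<forall>m. m \<notin> Pp \<longrightarrow> (\<forall>l. Cv m l = 0)" by (simp add: Cv_def Pp_def)
    have inf: "infinite Pp"
    proof
      assume "finite Pp"
      then obtain B where B: "\<forall>m\<in>Pp. m < B" by (meson finite_nat_set_iff_bounded)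
      define g where "g = (\<lambda>m. if closes v (ST v e m) (e m) then sum_list (map (\<lambda>_. 1::int) (cyc v (ST v e m) (e m))) else 0)"
      have g0: "\<forall>m. g m \<ge> 0" by (simp add: g_def sum_list_triv)
      have gB: "\<forall>m\<ge>B. g m = 0" using B unfolding g_def Pp_def by force
      define n where "n = Suc (nat (int N + (\<Sum>m<B. g m)))"
      have ps: "(\<Sum>j<n. (\<lambda>_. 1::int) (e j)) = sum_list (map (\<lambda>_. 1::int) (ST v e n)) + (\<Sum>m<n. g m)"
        unfolding g_def by (rule play_sum)
      have v: "valid E V v (ST v e n)" using play_stack[OF pl eE vV'] tV eE by blast
      have ls: "length (ST v e n) < N" using stack_bound(2)[OF v gf(1) rM cf(2)] N_def by simp
      have "int n = int (length (ST v e n)) + (\<Sum>m<n. g m)" using ps by (simp add: sum_list_triv)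
      also have "\<dots> \<le> int N + (\<Sum>m<B. g m)" using ls sum_bounded_after[OF g0 gB, of n] by linarith
      finally show False unfolding n_def by linarith
    qed
    have bd: "\<forall>l\<in>{1..d}. \<exists>K. \<forall>n. \<bar>(\<Sum>j\<le>n. fst (snd (e j)) l) - (\<Sum>m\<le>n. Cv m l)\<bar> \<le> K"
      using lex_bd[OF pl vV' gf(1) gf(2) tV] unfolding Cv_def by blast
    from lex2[of Pp d Cv "\<lambda>l n. (\<Sum>j\<le>n. fst (snd (e j)) l)", OF ballI[OF ng] z inf bd]
    show "lex_win2 d e" unfolding lex_win2_def psum_eq by simp
  qed
qed

theorem mainTheorem3:
  fixes V1 V2 :: "'v set" and E :: "'v edge set" and d :: nat and v :: 'v
  assumes "game_graph V1 V2 E d"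
    and "v \<in> V1 \<union> V2"
  shows "(mp_value V1 E (mpw (V1 \<union> V2) E d) v \<ge> 0 \<longrightarrow>
            (\<forall>\<sigma>. positional V1 E \<sigma> \<and> optimal_max V1 V2 E (mpw (V1 \<union> V2) E d) (lift \<sigma>)
                  \<longrightarrow> winning1 V1 E d (lift \<sigma>) v))
       \<and> (mp_value V1 E (mpw (V1 \<union> V2) E d) v < 0 \<longrightarrow>
            (\<forall>\<tau>. positional V2 E \<tau> \<and> optimal_min V1 V2 E (mpw (V1 \<union> V2) E d) (lift \<tau>)
                  \<longrightarrow> winning2 V2 E d (lift \<tau>) v))"
  using part1[OF assms] part2[OF assms] by blast


end
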